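(* Assume $(\hat A,\hat B)=(A_\star,B_\star)$ (exact model), that $m\le n$, $R\succeq I$, $Q\succeq I$, $(A_\star,B_\star)$ is stabilizable, and that $\|A_\star\|,\|B_\star\|,\|P_\star\|\le\Upsilon_\star$ for a constant $\Upsilon_\star\ge\max\{1,\varepsilon_\mathrm{m}\}$, where $\varepsilon_\mathrm{m}\ge 0$. Let $N\ge1$ be an integer and $P\in\mathbb{S}^n_+$ with $\|P-P_\star\|\le\varepsilon_\mathrm{p}$. Let $K_\mathrm{mpc}=\mathcal{K}_{A_\star,B_\star}\big(\mathcal{R}^{(N-1)}_{A_\star,B_\star}(P)\big)$. If $\Upsilon_\star\ge\beta_\star(1-\beta_\star^{-1})^{N-1}\varepsilon_\mathrm{p}$ and $\varepsilon_\mathrm{m}+\beta_\star(1-\beta_\star^{-1})^{N-1}\varepsilon_\mathrm{p}\le \underline{\sigma}(R)/(40\Upsilon_\star^4\|P_\star\|^{3/2})$, then $A_\star-B_\star K_\mathrm{mpc}$ is Schur stable and $$J_{K_\mathrm{mpc}}-J_{K_\star}\le 32\,m\,\sigma_w^2\,\Upsilon_\star^4(\sqrt{\|P_\star\|}+1)^2\|P_\star\|(\overline{\sigma}(R)+\Upsilon_\star^3)\,\beta_\star^2(1-\beta_\star^{-1})^{2(N-1)}\varepsilon_\mathrm{p}^2.$$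
   Context: True system: $x_{t+1}=A_\star x_t+B_\star u_t+w_t$, $x_t\in\mathbb{R}^n,u_t\in\mathbb{R}^m$, $w_t$ white noise with $\mathbb{E}(w_tw_t^\top)=\sigma_w^2I$, $x_0$ zero-mean with covariance $\sigma_x^2 I$ uncorrelated with the noise. Weights $Q\in\mathbb{S}^n_+$, $R\in\mathbb{S}^m_{++}$. $\|\cdot\|$ is the spectral norm; $\overline{\sigma},\underline{\sigma}$ are largest/smallest singular values. $S_B=BR^{-1}B^\top$; Riccati map $\mathcal{R}_{A,B}(P)=A^\top P(I+S_BP)^{-1}A+Q$ on $\mathbb{S}^n_+$, iterates $\mathcal{R}^{(0)}_{A,B}=\mathrm{id}$, $\mathcal{R}^{(i+1)}_{A,B}=\mathcal{R}_{A,B}\circ\mathcal{R}^{(i)}_{A,B}$. $\mathcal{K}_{A,B}(F)=(R+B^\top FB)^{-1}B^\top FA$. $P_\star$ is the unique positive definite solution of $P_\star=\mathcal{R}_{A_\star,B_\star}(P_\star)$, $K_\star=\mathcal{K}_{A_\star,B_\star}(P_\star)$, and $\beta_\star=\overline{\sigma}(P_\star)/\underline{\sigma}(Q)$. For a static gain $K$ with $\rho(A_\star-B_\star K)<1$, $J_K=\lim_{T\to\infty}\frac1T\mathbb{E}\big[\sum_{t=0}^{T-1}(x_t^\top Qx_t+u_t^\top Ru_t)\big]$ under $u_t=-Kx_t$. The gain $K_\mathrm{mpc}$ is the static feedback equivalent to the receding-horizon LQ controller with horizon $N$, terminal cost $x^\top Px$ and prediction model $(\hat A,\hat B)$. *)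

theory Defs
  imports "HOL-Analysis.Analysis" "HOL-Probability.Probability"
begin

definition specnorm :: "real^'c^'r \<Rightarrow> real" where
  "specnorm A = onorm (\<lambda>x. A *v x)"

definition smin :: "real^'c^'r \<Rightarrow> real" where
  "smin A = Inf {norm (A *v x) | x. norm x = 1}"

definition psd :: "real^'n^'n \<Rightarrow> bool" where
  "psd M \<longleftrightarrow> transpose M = M \<and> (\<forall>x. 0 \<le> x \<bullet> (M *v x))"

definition pd :: "real^'n^'n \<Rightarrow> bool" where
  "pd M \<longleftrightarrow> transpose M = M \<and> (\<forall>x. x \<noteq> 0 \<longrightarrow> 0 < x \<bullet> (M *v x))"

text \<open>Complexification of a real matrix; Schur stability = spectral radius < 1,
  i.e. every (complex) eigenvalue has modulus < 1.\<close>
definition cmat :: "real^'n^'n \<Rightarrow> complex^'n^'n" where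
  "cmat A = (\<chi> i j. complex_of_real (A $ i $ j))"

definition schur_stable :: "real^'n^'n \<Rightarrow> bool" where
  "schur_stable A \<longleftrightarrow> (\<forall>(c::complex) v. v \<noteq> 0 \<and> cmat A *v v = c *s v \<longrightarrow> cmod c < 1)"

definition stabilizable :: "real^'n^'n \<Rightarrow> real^'m^'n \<Rightarrow> bool" where
  "stabilizable A B \<longleftrightarrow> (\<exists>K :: real^'n^'m. schur_stable (A - B ** K))"

definition riccati :: "real^'n^'n \<Rightarrow> real^'m^'n \<Rightarrow> real^'n^'n \<Rightarrow> real^'m^'m
    \<Rightarrow> real^'n^'n \<Rightarrow> real^'n^'n" where
  "riccati A B Q R P =
     transpose A ** P ** matrix_inv (mat 1 + B ** matrix_inv R ** transpose B ** P) ** A + Q"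

definition gainK :: "real^'n^'n \<Rightarrow> real^'m^'n \<Rightarrow> real^'m^'m \<Rightarrow> real^'n^'n \<Rightarrow> real^'n^'m" where
  "gainK A B R F = matrix_inv (R + transpose B ** F ** B) ** transpose B ** F ** A"

definition noise_model :: "'a measure \<Rightarrow> real \<Rightarrow> real \<Rightarrow> ('a \<Rightarrow> real^'n)
    \<Rightarrow> (nat \<Rightarrow> 'a \<Rightarrow> real^'n) \<Rightarrow> bool" where
  "noise_model M sw sx x0 w \<longleftrightarrow>
     prob_space M \<and>
     x0 \<in> borel_measurable M \<and> (\<forall>t. w t \<in> borel_measurable M) \<and>
     (\<forall>i. integrable M (\<lambda>\<omega>. (x0 \<omega> $ i)^2)) \<and>
     (\<forall>t i. integrable M (\<lambda>\<omega>. (w t \<omega> $ i)^2)) \<and>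
     (\<forall>i. integral\<^sup>L M (\<lambda>\<omega>. x0 \<omega> $ i) = 0) \<and>
     (\<forall>t i. integral\<^sup>L M (\<lambda>\<omega>. w t \<omega> $ i) = 0) \<and>
     (\<forall>t s i j. integral\<^sup>L M (\<lambda>\<omega>. w t \<omega> $ i * w s \<omega> $ j)
                 = (if t = s \<and> i = j then sw^2 else 0)) \<and>
     (\<forall>i j. integral\<^sup>L M (\<lambda>\<omega>. x0 \<omega> $ i * x0 \<omega> $ j) = (if i = j then sx^2 else 0)) \<and>
     (\<forall>t i j. integral\<^sup>L M (\<lambda>\<omega>. x0 \<omega> $ i * w t \<omega> $ j) = 0)"

primrec clx :: "real^'n^'n \<Rightarrow> real^'m^'n \<Rightarrow> real^'n^'m \<Rightarrow> ('a \<Rightarrow> real^'n)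
    \<Rightarrow> (nat \<Rightarrow> 'a \<Rightarrow> real^'n) \<Rightarrow> nat \<Rightarrow> 'a \<Rightarrow> real^'n" where
  "clx A B K x0 w 0 = x0"
| "clx A B K x0 w (Suc t) =
     (\<lambda>\<omega>. A *v clx A B K x0 w t \<omega> + B *v (- (K *v clx A B K x0 w t \<omega>)) + w t \<omega>)"

definition lqr_cost :: "'a measure \<Rightarrow> real^'n^'n \<Rightarrow> real^'m^'n \<Rightarrow> real^'n^'n \<Rightarrow> real^'m^'m
    \<Rightarrow> ('a \<Rightarrow> real^'n) \<Rightarrow> (nat \<Rightarrow> 'a \<Rightarrow> real^'n) \<Rightarrow> real^'n^'m \<Rightarrow> real" where
  "lqr_cost M A B Q R x0 w K =
     lim (\<lambda>T. (1 / real T) * (\<Sum>t<T. integral\<^sup>L M (\<lambda>\<omega>.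
        let x = clx A B K x0 w t \<omega>; u = - (K *v x) in x \<bullet> (Q *v x) + u \<bullet> (R *v u))))"

end

theory Submission
  imports Defs
begin


declare transpose_matrix_vector[simp del]

lemma tdot: "(transpose M *v x) \<bullet> y = x \<bullet> (M *v y)" for M :: "real^'c^'r"
  by (simp add: dot_lmul_matrix transpose_matrix_vector)

lemma tdot2: "y \<bullet> (transpose M *v x) = (M *v y) \<bullet> x" for M :: "real^'c^'r"
  by (metis inner_commute tdot)

lemma sym_dot: "transpose M = M \<Longrightarrow> x \<bullet> (M *v y) = y \<bullet> (M *v x)" for M :: "real^'n^'n"
  by (metis inner_commute tdot)

lemma entry_dot: "M $ i $ j = axis i 1 \<bullet> (M *v axis j (1::real))" for M :: "real^'c^'r"
  by (simp add: inner_axis' matrix_vector_mult_basis column_def)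

lemma sym_from_dot: fixes M :: "real^'n^'n"
  assumes "\<And>x y. x \<bullet> (M *v y) = y \<bullet> (M *v x)" shows "transpose M = M"
proof -
  have "transpose M $ i $ j = M $ i $ j" for i j
    using assms[of "axis j 1" "axis i 1"] by (simp add: transpose_def entry_dot[symmetric])
  then show ?thesis by (simp add: vec_eq_iff)
qed

lemma norm_mv: "norm (A *v x) \<le> specnorm A * norm x" for A :: "real^'c^'r"
  unfolding specnorm_def by (rule onorm) simp

lemma quad_le: "x \<bullet> (A *v x) \<le> specnorm A * (norm x)^2" for A :: "real^'n^'n"
proof -
  have "x \<bullet> (A *v x) \<le> norm x * norm (A *v x)" by (simp add: Cauchy_Schwarz_ineq2 abs_le_D1)
  also have "\<dots> \<le> norm x * (specnorm A * norm x)" by (simp add: mult_left_mono norm_mv)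
  finally show ?thesis by (simp add: power2_eq_square mult_ac)
qed

lemma quad_abs_le: "\<bar>x \<bullet> (A *v x)\<bar> \<le> specnorm A * (norm x)^2" for A :: "real^'n^'n"
proof -
  have "\<bar>x \<bullet> (A *v x)\<bar> \<le> norm x * norm (A *v x)" by (simp add: Cauchy_Schwarz_ineq2)
  also have "\<dots> \<le> norm x * (specnorm A * norm x)" by (simp add: mult_left_mono norm_mv)
  finally show ?thesis by (simp add: power2_eq_square mult_ac)
qed

lemma transp_norm:
  fixes X :: "real^'c^'r"
  assumes "\<And>x. (norm (X *v x))^2 \<le> c * (norm x)^2"
  shows "(norm (transpose X *v y))^2 \<le> c * (norm y)^2"
proof -
  let ?z = "transpose X *v y"
  have c0: "c \<ge> 0" using assms[of "axis undefined 1"] 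
    by (metis norm_axis_1 mult_1_right one_power2 order_trans zero_le_power2)
  have "(norm ?z)^2 = ?z \<bullet> ?z" by (simp add: power2_norm_eq_inner)
  also have "\<dots> = y \<bullet> (X *v ?z)" by (rule tdot)
  also have "\<dots> \<le> norm y * norm (X *v ?z)" by (simp add: Cauchy_Schwarz_ineq2 abs_le_D1)
  finally have a: "(norm ?z)^2 \<le> norm y * norm (X *v ?z)" .
  have b: "norm (X *v ?z) \<le> sqrt c * norm ?z"
    using assms[of ?z] c0 by (metis real_le_rsqrt real_sqrt_mult real_sqrt_abs abs_norm_cancel power_mult_distrib real_sqrt_pow2 norm_ge_zero sqrt_le_D)
  have "(norm ?z)^2 \<le> norm y * (sqrt c * norm ?z)"
    using a b by (meson mult_left_mono norm_ge_zero order_trans)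
  then have "norm ?z \<le> norm y * sqrt c"
    using c0 by (cases "norm ?z = 0") (auto simp: power2_eq_square mult_ac)
  then have "(norm ?z)^2 \<le> (norm y * sqrt c)^2" by (simp add: power_mono)
  then show ?thesis using c0 by (simp add: power_mult_distrib mult_ac)
qed

definition symf :: "real^'n^'n \<Rightarrow> bool" where
  "symf M \<longleftrightarrow> (\<forall>x y. x \<bullet> (M *v y) = y \<bullet> (M *v x))"

lemma symf_D: "symf M \<Longrightarrow> x \<bullet> (M *v y) = y \<bullet> (M *v x)" by (simp add: symf_def)
lemma symf_T: "transpose M = M \<Longrightarrow> symf M" by (simp add: symf_def sym_dot)
lemma symf_iff: "symf M \<longleftrightarrow> transpose M = M"
  using symf_T sym_from_dot symf_def by blast

lemma quad_expand:
  fixes M :: "real^'n^'n"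
  assumes "symf M"
  shows "(x + t *\<^sub>R y) \<bullet> (M *v (x + t *\<^sub>R y)) = x \<bullet> (M *v x) + 2 * t * (y \<bullet> (M *v x)) + t^2 * (y \<bullet> (M *v y))"
proof -
  have s: "x \<bullet> (M *v y) = y \<bullet> (M *v x)" using symf_D[OF assms] .
  show ?thesis
    by (simp add: matrix_vector_right_distrib matrix_vector_mult_scaleR inner_add_left inner_add_right s power2_eq_square algebra_simps)
qed

lemma psd_zero:
  fixes M :: "real^'n^'n"
  assumes sym: "symf M" and pos: "\<And>x. 0 \<le> x \<bullet> (M *v x)" and z: "x \<bullet> (M *v x) = 0"
  shows "M *v x = 0"
proof (rule ccontr)
  assume ne: "M *v x \<noteq> 0"
  define y where "y = M *v x"
  define a where "a = y \<bullet> y"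
  define c where "c = y \<bullet> (M *v y)"
  have a0: "a > 0" using ne by (simp add: a_def y_def)
  have c0: "c \<ge> 0" using pos c_def by simp
  define t where "t = - a / (c + 1)"
  have "0 \<le> (x + t *\<^sub>R y) \<bullet> (M *v (x + t *\<^sub>R y))" using pos by blast
  also have "\<dots> = 2 * t * a + t^2 * c"
    using quad_expand[OF sym, of x t y] z by (simp add: a_def c_def y_def)
  finally have h: "0 \<le> 2 * t * a + t^2 * c" .
  have c1: "c + 1 > 0" using c0 by simp
  have tc: "t * (c + 1) = - a" using c1 by (simp add: t_def)
  have "(c+1)^2 * (2 * t * a + t^2 * c) = 2*a*(t*(c+1))*(c+1) + (t*(c+1))^2*c"
    by (simp add: power2_eq_square algebra_simps)
  also have "\<dots> = 2*a*(-a)*(c+1) + (-a)^2*c" by (simp only: tc)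
  also have "\<dots> = a^2 * (c - 2 * (c + 1))" by (simp add: power2_eq_square algebra_simps)
  also have "\<dots> < 0" using a0 c0 by (intro mult_pos_neg) auto
  finally have "(c+1)^2 * (2 * t * a + t^2 * c) < 0" .
  moreover have "(c+1)^2 * (2 * t * a + t^2 * c) \<ge> 0" using h by simp
  ultimately show False by simp
qed

lemma inv_props:
  fixes M :: "real^'n^'n"
  assumes "\<And>x. M *v x = 0 \<Longrightarrow> x = 0"
  shows "M ** matrix_inv M = mat 1" "matrix_inv M ** M = mat 1"
proof -
  have "\<exists>B. B ** M = mat 1" using assms matrix_left_invertible_ker by blast
  then have "invertible M" using invertible_left_inverse by blast
  then have "\<exists>A'. M ** A' = mat 1 \<and> A' ** M = mat 1" unfolding invertible_def .
  then have "M ** matrix_inv M = mat 1 \<and> matrix_inv M ** M = mat 1"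
    unfolding matrix_inv_def by (rule someI_ex)
  then show "M ** matrix_inv M = mat 1" "matrix_inv M ** M = mat 1" by auto
qed

lemma inv_apply:
  fixes M :: "real^'n^'n"
  assumes "\<And>x. M *v x = 0 \<Longrightarrow> x = 0"
  shows "M *v (matrix_inv M *v y) = y" "matrix_inv M *v (M *v y) = y"
  using inv_props[OF assms] by (simp_all add: matrix_vector_mul_assoc)

lemma polar:
  fixes D :: "real^'n^'n"
  assumes sym: "symf D" and b: "\<And>x. \<bar>x \<bullet> (D *v x)\<bar> \<le> c * (norm x)^2"
  shows "norm (D *v x) \<le> c * norm x"
proof (cases "D *v x = 0")
  case True
  have "c \<ge> 0" using b[of "axis undefined 1"] by (metis abs_ge_zero norm_axis_1 mult_1_right one_power2 order_trans)
  then show ?thesis using True by simp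
next
  case False
  define y where "y = (norm x / norm (D *v x)) *\<^sub>R (D *v x)"
  have e1: "(x + y) \<bullet> (D *v (x + y)) = x \<bullet> (D *v x) + 2 * (y \<bullet> (D *v x)) + y \<bullet> (D *v y)"
    using quad_expand[OF sym, of x 1 y] by simp
  have e2: "(x + (-1) *\<^sub>R y) \<bullet> (D *v (x + (-1) *\<^sub>R y)) = x \<bullet> (D *v x) - 2 * (y \<bullet> (D *v x)) + y \<bullet> (D *v y)"
    using quad_expand[OF sym, of x "-1" y] by simp
  have "4 * (y \<bullet> (D *v x)) = (x + y) \<bullet> (D *v (x + y)) - (x + (-1) *\<^sub>R y) \<bullet> (D *v (x + (-1) *\<^sub>R y))"
    using e1 e2 by simp
  also have "\<dots> \<le> c * (norm (x + y))^2 + c * (norm (x + (-1) *\<^sub>R y))^2"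
    using b[of "x+y"] b[of "x + (-1) *\<^sub>R y"] by linarith
  also have "\<dots> = c * (2 * (norm x)^2 + 2 * (norm y)^2)"
    by (simp add: power2_norm_eq_inner inner_add_left inner_add_right inner_diff_left inner_diff_right algebra_simps)
  also have "norm y = norm x" using False by (simp add: y_def)
  finally have h: "4 * (y \<bullet> (D *v x)) \<le> c * (4 * (norm x)^2)" by simp
  have "y \<bullet> (D *v x) = norm x * norm (D *v x)"
    using False by (simp add: y_def power2_norm_eq_inner[symmetric] power2_eq_square)
  then have "norm x * norm (D *v x) \<le> c * norm x * norm x" using h by (simp add: power2_eq_square)
  moreover have "norm x > 0" using False by auto
  ultimately show ?thesis by (simp add: mult_le_cancel_left_pos mult.commute[of _ "norm x"] mult.assoc)
qed

lemma smin_lower: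
  fixes M :: "real^'n^'n"
  assumes sym: "symf M" and pos: "\<And>x. 0 \<le> x \<bullet> (M *v x)"
  shows "smin M * (norm x)^2 \<le> x \<bullet> (M *v x)"
proof -
  let ?f = "\<lambda>x. x \<bullet> (M *v x)"
  have "sphere (0::real^'n) 1 \<noteq> {}" by (metis norm_axis_1 mem_sphere_0 empty_iff)
  moreover have "continuous_on (sphere 0 1) ?f"
    by (intro continuous_intros)
  ultimately obtain x0 where x0: "x0 \<in> sphere 0 1" and mn: "\<And>y. y \<in> sphere 0 1 \<Longrightarrow> ?f x0 \<le> ?f y"
    using continuous_attains_inf[OF compact_sphere] by blast
  define mu where "mu = ?f x0"
  have nx0: "norm x0 = 1" using x0 by simp
  have ge: "mu * (norm x)^2 \<le> ?f x" for x
  proof (cases "x = 0")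
    case True then show ?thesis by simp
  next
    case False
    let ?u = "(1 / norm x) *\<^sub>R x"
    have "mu \<le> ?f ?u" unfolding mu_def by (rule mn) (use False in simp)
    also have "?f ?u = ?f x / (norm x)^2"
      by (simp add: matrix_vector_mult_scaleR power2_eq_square)
    finally show ?thesis using False by (simp add: field_simps)
  qed
  define M' where "M' = M - mu *\<^sub>R mat 1"
  have M'v: "M' *v y = M *v y - mu *\<^sub>R y" for y
    by (simp add: M'_def matrix_vector_mult_diff_rdistrib scaleR_matrix_vector_assoc[symmetric])
  have symM': "symf M'" using sym by (simp add: symf_def M'v inner_diff_right inner_commute)
  have posM': "0 \<le> y \<bullet> (M' *v y)" for y using ge[of y] by (simp add: M'v inner_diff_right power2_norm_eq_inner)
  have "x0 \<bullet> (M' *v x0) = 0" using nx0 by (simp add: M'v inner_diff_right mu_def power2_norm_eq_inner[symmetric])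
  then have "M' *v x0 = 0" by (rule psd_zero[OF symM' posM'])
  then have Mx0: "M *v x0 = mu *\<^sub>R x0" by (simp add: M'v)
  have mu0: "mu \<ge> 0" using pos mu_def by simp
  have "smin M \<le> norm (M *v x0)"
    unfolding smin_def by (rule cInf_lower) (use nx0 in \<open>auto intro!: bdd_belowI[where m=0]\<close>)
  also have "\<dots> = mu" using Mx0 nx0 mu0 by simp
  finally have "smin M \<le> mu" .
  then have "smin M * (norm x)^2 \<le> mu * (norm x)^2" by (simp add: mult_right_mono)
  then show ?thesis using ge[of x] by linarith
qed

lemma smin_ge1:
  fixes M :: "real^'n^'n"
  assumes "\<And>x. (norm x)^2 \<le> x \<bullet> (M *v x)"
  shows "1 \<le> smin M"
  unfolding smin_def
proof (rule cInf_greatest)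
  show "{norm (M *v x) |x. norm x = 1} \<noteq> {}" by (metis (mono_tags) empty_Collect_eq norm_axis_1)
  fix y assume "y \<in> {norm (M *v x) |x. norm x = 1}"
  then obtain x where x: "norm x = 1" "y = norm (M *v x)" by auto
  have "1 \<le> x \<bullet> (M *v x)" using assms[of x] x by simp
  also have "\<dots> \<le> norm x * norm (M *v x)" by (simp add: Cauchy_Schwarz_ineq2 abs_le_D1)
  finally show "1 \<le> y" using x by simp
qed


definition psdf :: "real^'n^'n \<Rightarrow> bool" where
  "psdf F \<longleftrightarrow> symf F \<and> (\<forall>x. 0 \<le> x \<bullet> (F *v x))"

locale lq =
  fixes A :: "real^'n^'n" and B :: "real^'m^'n" and Q :: "real^'n^'n" and R :: "real^'m^'m"
  assumes Rsym: "symf R" and RI: "\<And>z. (norm z)^2 \<le> z \<bullet> (R *v z)"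
    and Qsym: "symf Q" and QI: "\<And>x. (norm x)^2 \<le> x \<bullet> (Q *v x)"
begin

definition G :: "real^'n^'n \<Rightarrow> real^'m^'m" where
  "G F = R + transpose B ** F ** B"

definition ric where "ric F = riccati A B Q R F"
definition gain where "gain F = gainK A B R F"

lemma Gv: "G F *v z = R *v z + transpose B *v (F *v (B *v z))"
  by (simp add: G_def matrix_vector_mult_add_rdistrib matrix_vector_mul_assoc[symmetric])

lemma G_sym: "symf F \<Longrightarrow> symf (G F)"
  using Rsym by (simp add: symf_def Gv inner_add_right tdot2 tdot)

lemma G_ge: "psdf F \<Longrightarrow> (norm z)^2 \<le> z \<bullet> (G F *v z)"
  using RI[of z] by (auto simp: psdf_def Gv inner_add_right tdot2 intro: add_increasing2)

lemma G_ge_R: "psdf F \<Longrightarrow> z \<bullet> (R *v z) \<le> z \<bullet> (G F *v z)"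
  by (auto simp: psdf_def Gv inner_add_right tdot2)

lemma inj_of_ge: 
  fixes M :: "real^'k^'k"
  assumes "\<And>z. (norm z)^2 \<le> z \<bullet> (M *v z)" shows "M *v z = 0 \<Longrightarrow> z = 0"
  using assms[of z] by simp

lemma G_inv: "psdf F \<Longrightarrow> G F *v (matrix_inv (G F) *v y) = y"
  "psdf F \<Longrightarrow> matrix_inv (G F) *v (G F *v y) = y"
  using inv_apply[OF inj_of_ge[OF G_ge]] by auto

lemma R_inv: "R *v (matrix_inv R *v y) = y" "matrix_inv R *v (R *v y) = y"
  using inv_apply[OF inj_of_ge[OF RI]] by auto

lemma inv_sym:
  fixes M :: "real^'k^'k"
  assumes s: "symf M" and i1: "\<And>y. M *v (matrix_inv M *v y) = y"
  shows "symf (matrix_inv M)"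
  unfolding symf_def
proof (intro allI)
  fix x y
  have "x \<bullet> (matrix_inv M *v y) = (M *v (matrix_inv M *v x)) \<bullet> (matrix_inv M *v y)" by (simp add: i1)
  also have "\<dots> = (matrix_inv M *v x) \<bullet> (M *v (matrix_inv M *v y))"
    using symf_D[OF s] by (simp add: inner_commute)
  also have "\<dots> = y \<bullet> (matrix_inv M *v x)" by (simp add: i1 inner_commute)
  finally show "x \<bullet> (matrix_inv M *v y) = y \<bullet> (matrix_inv M *v x)" .
qed

lemma Rinv_psd: "0 \<le> y \<bullet> (matrix_inv R *v y)"
proof -
  have "y \<bullet> (matrix_inv R *v y) = (R *v (matrix_inv R *v y)) \<bullet> (matrix_inv R *v y)" by (simp add: R_inv)
  also have "\<dots> \<ge> 0" using RI[of "matrix_inv R *v y"] by (simp add: inner_commute) (meson order_trans zero_le_power2)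
  finally show ?thesis by simp
qed

definition SF :: "real^'n^'n \<Rightarrow> real^'n^'n" where
  "SF F = mat 1 + B ** matrix_inv R ** transpose B ** F"

lemma SFv: "SF F *v y = y + B *v (matrix_inv R *v (transpose B *v (F *v y)))"
  by (simp add: SF_def matrix_vector_mult_add_rdistrib matrix_vector_mul_assoc[symmetric])

lemma SF_inj:
  assumes F: "psdf F" and z: "SF F *v y = 0" shows "y = 0"
proof -
  let ?u = "F *v y"
  have y: "y = - (B *v (matrix_inv R *v (transpose B *v ?u)))" using z by (simp add: SFv eq_neg_iff_add_eq_0)
  have "y \<bullet> ?u = - ((transpose B *v ?u) \<bullet> (matrix_inv R *v (transpose B *v ?u)))"
    by (subst y) (simp add: tdot inner_commute)
  also have "\<dots> \<le> 0" using Rinv_psd by simp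
  finally have "y \<bullet> ?u \<le> 0" .
  moreover have "0 \<le> y \<bullet> ?u" using F by (simp add: psdf_def)
  ultimately have "y \<bullet> ?u = 0" by simp
  then have "?u = 0" using psd_zero F by (auto simp: psdf_def)
  then show "y = 0" using y by simp
qed

lemma SF_inv: assumes "psdf F" shows "SF F *v (matrix_inv (SF F) *v y) = y"
proof -
  have "\<And>x. SF F *v x = 0 \<Longrightarrow> x = 0" using SF_inj[OF assms] by blast
  then show ?thesis by (rule inv_apply(1))
qed

lemma key_inv:
  assumes F: "psdf F"
  shows "F *v (matrix_inv (SF F) *v y) = F *v y - F *v (B *v (matrix_inv (G F) *v (transpose B *v (F *v y))))"
proof -
  define z where "z = matrix_inv (SF F) *v y"
  have y: "y = z + B *v (matrix_inv R *v (transpose B *v (F *v z)))"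
    using SF_inv[OF F, of y] by (simp add: z_def SFv)
  define u where "u = matrix_inv R *v (transpose B *v (F *v z))"
  have Ru: "R *v u = transpose B *v (F *v z)" by (simp add: u_def R_inv)
  have y2: "y = z + B *v u" using y by (simp add: u_def)
  have "transpose B *v (F *v y) = transpose B *v (F *v z) + transpose B *v (F *v (B *v u))"
    by (simp add: y2 matrix_vector_right_distrib)
  also have "\<dots> = G F *v u" by (simp add: Gv Ru)
  finally have gu: "matrix_inv (G F) *v (transpose B *v (F *v y)) = u" using G_inv(2)[OF F] by simp
  have "F *v y - F *v (B *v u) = F *v z" by (simp add: y2 matrix_vector_right_distrib)
  then show ?thesis by (simp add: z_def[symmetric] gu)
qed

lemma ricv: "ric F *v x = transpose A *v (F *v (matrix_inv (SF F) *v (A *v x))) + Q *v x"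
  by (simp add: ric_def riccati_def SF_def[symmetric] matrix_vector_mult_add_rdistrib matrix_vector_mul_assoc[symmetric])

lemma gainv: "gain F *v x = matrix_inv (G F) *v (transpose B *v (F *v (A *v x)))"
  by (simp add: gain_def gainK_def G_def[symmetric] matrix_vector_mul_assoc[symmetric])

lemma ric_quad:
  assumes F: "psdf F"
  shows "x \<bullet> (ric F *v y) = x \<bullet> (Q *v y) + (A *v x) \<bullet> (F *v (A *v y))
     - (transpose B *v (F *v (A *v x))) \<bullet> (matrix_inv (G F) *v (transpose B *v (F *v (A *v y))))"
proof -
  have sF: "symf F" using F by (simp add: psdf_def)
  have "x \<bullet> (ric F *v y) = (A *v x) \<bullet> (F *v (matrix_inv (SF F) *v (A *v y))) + x \<bullet> (Q *v y)"
    by (simp add: ricv inner_add_right tdot2)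
  also have "(A *v x) \<bullet> (F *v (matrix_inv (SF F) *v (A *v y))) = (A *v x) \<bullet> (F *v (A *v y))
      - (A *v x) \<bullet> (F *v (B *v (matrix_inv (G F) *v (transpose B *v (F *v (A *v y))))))"
    by (simp add: key_inv[OF F] inner_diff_right)
  also have "(A *v x) \<bullet> (F *v (B *v (matrix_inv (G F) *v (transpose B *v (F *v (A *v y))))))
      = (transpose B *v (F *v (A *v x))) \<bullet> (matrix_inv (G F) *v (transpose B *v (F *v (A *v y))))"
    using symf_D[OF sF, of "A *v x"] by (simp add: tdot inner_commute)
  finally show ?thesis by simp
qed

lemma ric_sym: assumes F: "psdf F" shows "symf (ric F)"
proof -
  have sF: "symf F" using F by (simp add: psdf_def)
  have sG: "symf (matrix_inv (G F))" using inv_sym[OF G_sym G_inv(1)] F by (simp add: psdf_def)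
  show ?thesis unfolding symf_def
  proof (intro allI)
    fix x y
    have 1: "x \<bullet> (Q *v y) = y \<bullet> (Q *v x)" by (rule symf_D[OF Qsym])
    have 2: "(A *v x) \<bullet> (F *v (A *v y)) = (A *v y) \<bullet> (F *v (A *v x))" by (rule symf_D[OF sF])
    have 3: "(transpose B *v (F *v (A *v x))) \<bullet> (matrix_inv (G F) *v (transpose B *v (F *v (A *v y))))
      = (transpose B *v (F *v (A *v y))) \<bullet> (matrix_inv (G F) *v (transpose B *v (F *v (A *v x))))" by (rule symf_D[OF sG])
    show "x \<bullet> (ric F *v y) = y \<bullet> (ric F *v x)" unfolding ric_quad[OF F] 1 2 3 ..
  qed
qed

lemma star:
  assumes F: "psdf F"
  shows "x \<bullet> (ric F *v x) + (k - gain F *v x) \<bullet> (G F *v (k - gain F *v x))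
    = x \<bullet> (Q *v x) + k \<bullet> (R *v k) + (A *v x - B *v k) \<bullet> (F *v (A *v x - B *v k))"
proof -
  have sF: "symf F" using F by (simp add: psdf_def)
  have sG: "symf (G F)" using G_sym sF by blast
  define a where "a = A *v x"
  define kF where "kF = gain F *v x"
  have GkF: "G F *v kF = transpose B *v (F *v a)" by (simp add: kF_def gainv a_def G_inv(1)[OF F])
  have r: "x \<bullet> (ric F *v x) = x \<bullet> (Q *v x) + a \<bullet> (F *v a) - kF \<bullet> (G F *v kF)"
    using ric_quad[OF F, of x x] by (simp add: a_def[symmetric] GkF[symmetric] kF_def[symmetric] gainv G_inv(2)[OF F] inner_commute)
  have f1: "a \<bullet> (F *v (B *v k)) = (B *v k) \<bullet> (F *v a)" by (rule symf_D[OF sF])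
  have f2: "(B *v k) \<bullet> (F *v a) = k \<bullet> (G F *v kF)" by (simp add: GkF tdot2)
  have e1: "(a - B *v k) \<bullet> (F *v (a - B *v k)) = a \<bullet> (F *v a) - 2 * (k \<bullet> (G F *v kF)) + (B *v k) \<bullet> (F *v (B *v k))"
    by (simp add: matrix_vector_mult_diff_distrib inner_diff_left inner_diff_right f1 f2)
  have e2: "k \<bullet> (G F *v k) = k \<bullet> (R *v k) + (B *v k) \<bullet> (F *v (B *v k))"
    by (simp add: Gv inner_add_right tdot2)
  have e3: "(k - kF) \<bullet> (G F *v (k - kF)) = k \<bullet> (G F *v k) - 2 * (k \<bullet> (G F *v kF)) + kF \<bullet> (G F *v kF)"
    using symf_D[OF sG, of kF k] by (simp add: matrix_vector_mult_diff_distrib inner_diff_left inner_diff_right)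
  show ?thesis unfolding a_def[symmetric] kF_def[symmetric] using r e1 e2 e3 by simp
qed

end


lemma cesaro0:
  fixes c :: "nat \<Rightarrow> real"
  assumes "c \<longlonglongrightarrow> 0"
  shows "(\<lambda>T. (1 / real T) * (\<Sum>t<T. c t)) \<longlonglongrightarrow> 0"
proof (rule LIMSEQ_I)
  fix r :: real assume r: "r > 0"
  obtain N where N: "\<And>t. t \<ge> N \<Longrightarrow> norm (c t) < r / 2"
    using LIMSEQ_D[OF assms, of "r/2"] r by auto
  define S where "S = (\<Sum>t<N. norm (c t))"
  have S0: "S \<ge> 0" unfolding S_def by (simp add: sum_nonneg)
  obtain N2 :: nat where N2: "N2 > 2 * S / r" using reals_Archimedean2 by blast
  show "\<exists>no. \<forall>T\<ge>no. norm ((1 / real T) * (\<Sum>t<T. c t) - 0) < r"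
  proof (intro exI[of _ "max (Suc N) N2"] allI impI)
    fix T assume T: "max (Suc N) N2 \<le> T"
    have TN: "N \<le> T" and T2: "real N2 \<le> real T" using T by auto
    have Tpos: "real T > 0" using T by simp
    have split: "{..<T} = {..<N} \<union> {N..<T}" using TN by auto
    have "norm (\<Sum>t<T. c t) \<le> (\<Sum>t<T. norm (c t))" by (rule norm_sum)
    also have "\<dots> = S + (\<Sum>t\<in>{N..<T}. norm (c t))"
      unfolding S_def split by (subst sum.union_disjoint) auto
    also have "(\<Sum>t\<in>{N..<T}. norm (c t)) \<le> (\<Sum>t\<in>{N..<T}. r / 2)"
      by (intro sum_mono) (use N in \<open>auto intro: less_imp_le\<close>)
    also have "\<dots> = real (T - N) * (r / 2)" by simp
    also have "\<dots> \<le> real T * (r / 2)" using r by (intro mult_right_mono) auto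
    finally have h: "norm (\<Sum>t<T. c t) \<le> S + real T * (r / 2)" by simp
    have "r * real N2 \<le> r * real T" using T2 r by (intro mult_left_mono) auto
    moreover have "2 * S < r * real N2" using N2 r by (simp add: field_simps)
    ultimately have "S < real T * (r / 2)" by (simp add: mult.commute)
    then have "norm (\<Sum>t<T. c t) < real T * r" using h by linarith
    then show "norm ((1 / real T) * (\<Sum>t<T. c t) - 0) < r"
      using Tpos by (simp add: field_simps)
  qed
qed

lemma cesaro:
  fixes c :: "nat \<Rightarrow> real"
  assumes "c \<longlonglongrightarrow> l"
  shows "(\<lambda>T. (1 / real T) * (\<Sum>t<T. c t)) \<longlonglongrightarrow> l"
proof -
  have "(\<lambda>t. c t - l) \<longlonglongrightarrow> 0" using assms by (simp add: LIM_zero)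
  then have a: "(\<lambda>T. (1 / real T) * (\<Sum>t<T. c t - l)) \<longlonglongrightarrow> 0" by (rule cesaro0)
  have "eventually (\<lambda>T. (1 / real T) * (\<Sum>t<T. c t - l) = (1 / real T) * (\<Sum>t<T. c t) - l) sequentially"
    using eventually_gt_at_top[of 0]
    by eventually_elim (simp add: sum_subtractf field_simps)
  then have "(\<lambda>T. (1 / real T) * (\<Sum>t<T. c t) - l) \<longlonglongrightarrow> 0"
    using a by (rule Lim_transform_eventually[rotated])
  then show ?thesis by (simp add: LIM_zero_iff)
qed

definition trq :: "real^'n^'n \<Rightarrow> real^'k^'n \<Rightarrow> real" where
  "trq Y X = (\<Sum>i\<in>UNIV. (X *v axis i 1) \<bullet> (Y *v (X *v axis i 1)))"

primrec mpow :: "real^'n^'n \<Rightarrow> nat \<Rightarrow> real^'n^'n" where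
  "mpow L 0 = mat 1"
| "mpow L (Suc s) = L ** mpow L s"

lemma trq_conj: "trq (transpose L ** Y ** L) X = trq Y (L ** X)"
  by (simp add: trq_def matrix_vector_mul_assoc[symmetric] tdot2)

lemma trq_id: "trq Y (mat 1) = (\<Sum>i\<in>UNIV. Y $ i $ i)"
  by (simp add: trq_def entry_dot)

lemma abs_prod_le: "\<bar>a * b\<bar> \<le> a^2 + b^2" for a b :: real
proof -
  have "0 \<le> (\<bar>a\<bar> - \<bar>b\<bar>)^2" by simp
  then have "2 * (\<bar>a\<bar> * \<bar>b\<bar>) \<le> a^2 + b^2" by (simp add: power2_eq_square algebra_simps)
  moreover have "0 \<le> \<bar>a\<bar> * \<bar>b\<bar>" by simp
  moreover have "\<bar>a * b\<bar> = \<bar>a\<bar> * \<bar>b\<bar>" by (simp add: abs_mult)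
  ultimately show ?thesis by linarith
qed

lemma specnorm_nonneg: "0 \<le> specnorm (A :: real^'c^'r)"
  unfolding specnorm_def by (rule onorm_pos_le) simp

lemma trq_bound:
  fixes Y :: "real^'n^'n" and X :: "real^'k^'n"
  assumes "\<And>x. (norm (X *v x))^2 \<le> c * (norm x)^2"
  shows "\<bar>trq Y X\<bar> \<le> real CARD('k) * (specnorm Y * c)"
proof -
  have "\<bar>trq Y X\<bar> \<le> (\<Sum>i\<in>(UNIV::'k set). \<bar>(X *v axis i 1) \<bullet> (Y *v (X *v axis i 1))\<bar>)"
    unfolding trq_def by (rule sum_abs)
  also have "\<dots> \<le> (\<Sum>i\<in>(UNIV::'k set). specnorm Y * c)"
  proof (rule sum_mono)
    fix i :: 'k
    have "\<bar>(X *v axis i 1) \<bullet> (Y *v (X *v axis i 1))\<bar> \<le> specnorm Y * (norm (X *v axis i 1))^2" by (rule quad_abs_le)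
    also have "\<dots> \<le> specnorm Y * c" using assms[of "axis i 1"] specnorm_nonneg[of Y] by (intro mult_left_mono) auto
    finally show "\<bar>(X *v axis i 1) \<bullet> (Y *v (X *v axis i 1))\<bar> \<le> specnorm Y * c" .
  qed
  also have "\<dots> = real CARD('k) * (specnorm Y * c)" by simp
  finally show ?thesis .
qed

context
  fixes M :: "'a measure" and sw sx :: real and x0 :: "'a \<Rightarrow> real^'n" and w :: "nat \<Rightarrow> 'a \<Rightarrow> real^'n"
  assumes noise: "noise_model M sw sx x0 w"
begin

definition sqi :: "('a \<Rightarrow> real) \<Rightarrow> bool" where
  "sqi f \<longleftrightarrow> f \<in> borel_measurable M \<and> integrable M (\<lambda>\<omega>. (f \<omega>)^2)"

lemma sqi_prod: "sqi f \<Longrightarrow> sqi g \<Longrightarrow> integrable M (\<lambda>\<omega>. f \<omega> * g \<omega>)"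
  unfolding sqi_def
  by (rule Bochner_Integration.integrable_bound[where f="\<lambda>\<omega>. (f \<omega>)^2 + (g \<omega>)^2"])
     (auto intro!: AE_I2 simp: abs_prod_le)

lemma sqi_add: "sqi f \<Longrightarrow> sqi g \<Longrightarrow> sqi (\<lambda>\<omega>. f \<omega> + g \<omega>)"
proof -
  assume f: "sqi f" and g: "sqi g"
  have "integrable M (\<lambda>\<omega>. (f \<omega>)^2 + (g \<omega>)^2 + 2 * (f \<omega> * g \<omega>))"
    using f g sqi_prod[OF f g] unfolding sqi_def by auto
  moreover have "(\<lambda>\<omega>. f \<omega> + g \<omega>) \<in> borel_measurable M" using f g unfolding sqi_def by auto
  ultimately show ?thesis unfolding sqi_def by (simp add: power2_sum mult.assoc)
qed

lemma sqi_cmul: "sqi f \<Longrightarrow> sqi (\<lambda>\<omega>. c * f \<omega>)"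
  unfolding sqi_def by (auto simp: power_mult_distrib)

lemma sqi_zero: "sqi (\<lambda>\<omega>. 0)"
  unfolding sqi_def by simp

lemma sqi_sum: "finite I \<Longrightarrow> (\<And>i. i \<in> I \<Longrightarrow> sqi (f i)) \<Longrightarrow> sqi (\<lambda>\<omega>. \<Sum>i\<in>I. f i \<omega>)"
proof (induction I rule: finite_induct)
  case empty then show ?case by (simp add: sqi_zero)
next
  case (insert a I) then show ?case by (simp add: sqi_add)
qed

lemma comp_meas: "(f :: 'a \<Rightarrow> real^'n) \<in> borel_measurable M \<Longrightarrow> (\<lambda>\<omega>. f \<omega> $ i) \<in> borel_measurable M"
  by (rule borel_measurable_continuous_on[of "\<lambda>v. v $ i"]) (auto intro: continuous_intros)

lemma sqi_x0: "sqi (\<lambda>\<omega>. x0 \<omega> $ i)"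
  using noise unfolding noise_model_def sqi_def by (auto intro: comp_meas)

lemma sqi_w: "sqi (\<lambda>\<omega>. w t \<omega> $ i)"
  using noise unfolding noise_model_def sqi_def by (auto intro: comp_meas)

lemma Ex0w: "integral\<^sup>L M (\<lambda>\<omega>. x0 \<omega> $ i * w t \<omega> $ j) = 0"
  using noise unfolding noise_model_def by auto

lemma Eww: "integral\<^sup>L M (\<lambda>\<omega>. w t \<omega> $ i * w s \<omega> $ j) = (if t = s \<and> i = j then sw^2 else 0)"
  using noise unfolding noise_model_def by auto

lemma Ex0x0: "integral\<^sup>L M (\<lambda>\<omega>. x0 \<omega> $ i * x0 \<omega> $ j) = (if i = j then sx^2 else 0)"
  using noise unfolding noise_model_def by auto

lemma bilin:
  fixes u v :: "'a \<Rightarrow> real^'n" and Y :: "real^'n^'n"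
  assumes u: "\<And>i. sqi (\<lambda>\<omega>. u \<omega> $ i)" and v: "\<And>i. sqi (\<lambda>\<omega>. v \<omega> $ i)"
  shows "integrable M (\<lambda>\<omega>. u \<omega> \<bullet> (Y *v v \<omega>))"
    "integral\<^sup>L M (\<lambda>\<omega>. u \<omega> \<bullet> (Y *v v \<omega>)) = (\<Sum>i\<in>UNIV. \<Sum>j\<in>UNIV. Y$i$j * integral\<^sup>L M (\<lambda>\<omega>. u \<omega> $ i * v \<omega> $ j))"
proof -
  have e: "u \<omega> \<bullet> (Y *v v \<omega>) = (\<Sum>i\<in>UNIV. \<Sum>j\<in>UNIV. Y$i$j * (u \<omega> $ i * v \<omega> $ j))" for \<omega>
    by (simp add: inner_vec_def matrix_vector_mult_def sum_distrib_left mult_ac)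
  have int: "integrable M (\<lambda>\<omega>. u \<omega> $ i * v \<omega> $ j)" for i j by (rule sqi_prod[OF u v])
  show "integrable M (\<lambda>\<omega>. u \<omega> \<bullet> (Y *v v \<omega>))" unfolding e using int by auto
  show "integral\<^sup>L M (\<lambda>\<omega>. u \<omega> \<bullet> (Y *v v \<omega>)) = (\<Sum>i\<in>UNIV. \<Sum>j\<in>UNIV. Y$i$j * integral\<^sup>L M (\<lambda>\<omega>. u \<omega> $ i * v \<omega> $ j))"
    unfolding e using int by (simp add: integral_sum)
qed

lemma mv_neg: "A *v (- v) = - (A *v v)" for A :: "real^'c^'r"
  by (simp add: matrix_vector_mult_def sum_negf vec_eq_iff)

lemma clx_step: "clx As Bs K x0 w (Suc t) \<omega> = (As - Bs ** K) *v clx As Bs K x0 w t \<omega> + w t \<omega>"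
  by (simp add: matrix_vector_mult_diff_rdistrib matrix_vector_mul_assoc[symmetric] mv_neg)

lemma clx_lin:
  "(\<forall>i. sqi (\<lambda>\<omega>. clx As Bs K x0 w t \<omega> $ i)) \<and> (\<forall>s\<ge>t. \<forall>i j. integral\<^sup>L M (\<lambda>\<omega>. clx As Bs K x0 w t \<omega> $ i * w s \<omega> $ j) = 0)"
proof (induction t)
  case 0 then show ?case using sqi_x0 Ex0w by simp
next
  case (Suc t)
  define L where "L = As - Bs ** K"
  let ?L = L
  let ?X = "clx As Bs K x0 w t"
  have comp: "clx As Bs K x0 w (Suc t) \<omega> $ i = (\<Sum>k\<in>UNIV. ?L$i$k * ?X \<omega> $ k) + w t \<omega> $ i" for \<omega> i
    by (simp only: clx_step L_def[symmetric]) (simp add: matrix_vector_mult_def)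
  have sq: "sqi (\<lambda>\<omega>. clx As Bs K x0 w (Suc t) \<omega> $ i)" for i
    unfolding comp using Suc.IH by (intro sqi_add sqi_sum sqi_cmul sqi_w) auto
  have z: "integral\<^sup>L M (\<lambda>\<omega>. clx As Bs K x0 w (Suc t) \<omega> $ i * w s \<omega> $ j) = 0" if s: "s \<ge> Suc t" for s i j
  proof -
    have e: "clx As Bs K x0 w (Suc t) \<omega> $ i * w s \<omega> $ j = (\<Sum>k\<in>UNIV. ?L$i$k * (?X \<omega> $ k * w s \<omega> $ j)) + w t \<omega> $ i * w s \<omega> $ j" for \<omega>
      unfolding comp by (simp add: sum_distrib_right distrib_right mult.assoc)
    have int: "integrable M (\<lambda>\<omega>. ?X \<omega> $ k * w s \<omega> $ j)" for k using Suc.IH sqi_prod sqi_w by blast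
    have int2: "integrable M (\<lambda>\<omega>. w t \<omega> $ i * w s \<omega> $ j)" using sqi_prod sqi_w by blast
    have "integral\<^sup>L M (\<lambda>\<omega>. clx As Bs K x0 w (Suc t) \<omega> $ i * w s \<omega> $ j)
       = (\<Sum>k\<in>UNIV. ?L$i$k * integral\<^sup>L M (\<lambda>\<omega>. ?X \<omega> $ k * w s \<omega> $ j)) + integral\<^sup>L M (\<lambda>\<omega>. w t \<omega> $ i * w s \<omega> $ j)"
      unfolding e using int int2 by (simp add: integral_sum)
    also have "\<dots> = 0" using Suc.IH s Eww by simp
    finally show ?thesis .
  qed
  show ?case using sq z by blast
qed

definition Eq where "Eq As Bs K t Y = integral\<^sup>L M (\<lambda>\<omega>. clx As Bs K x0 w t \<omega> \<bullet> (Y *v clx As Bs K x0 w t \<omega>))"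

lemma delta_sum: "(\<Sum>i\<in>UNIV. \<Sum>j\<in>UNIV. Y$i$j * (if i = j then c else 0)) = c * trq Y (mat 1)"
  by (simp add: trq_id if_distrib sum_distrib_left mult.commute cong: if_cong)

lemma Eq0: "Eq As Bs K 0 Y = sx^2 * trq Y (mat 1)"
  unfolding Eq_def using bilin(2)[OF sqi_x0 sqi_x0, of Y] by (simp add: Ex0x0 delta_sum)

lemma EqSuc: "Eq As Bs K (Suc t) Y = Eq As Bs K t (transpose (As - Bs ** K) ** Y ** (As - Bs ** K)) + sw^2 * trq Y (mat 1)"
proof -
  define L where "L = As - Bs ** K"
  let ?L = L
  let ?X = "clx As Bs K x0 w t"
  have sX: "\<And>i. sqi (\<lambda>\<omega>. ?X \<omega> $ i)" using clx_lin by blast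
  have zX: "\<And>i j. integral\<^sup>L M (\<lambda>\<omega>. ?X \<omega> $ i * w t \<omega> $ j) = 0" using clx_lin by blast
  have pt: "clx As Bs K x0 w (Suc t) \<omega> \<bullet> (Y *v clx As Bs K x0 w (Suc t) \<omega>)
     = (?X \<omega> \<bullet> ((transpose ?L ** Y ** ?L) *v ?X \<omega>) + ?X \<omega> \<bullet> ((transpose ?L ** Y) *v w t \<omega>))
       + (w t \<omega> \<bullet> ((Y ** ?L) *v ?X \<omega>) + w t \<omega> \<bullet> (Y *v w t \<omega>))" for \<omega>
    unfolding clx_step L_def[symmetric]
    by (simp add: matrix_vector_mul_assoc[symmetric] tdot2 matrix_vector_right_distrib inner_add_left inner_add_right del: clx.simps)
  have i1: "integrable M (\<lambda>\<omega>. ?X \<omega> \<bullet> ((transpose ?L ** Y ** ?L) *v ?X \<omega>))" by (rule bilin(1)[OF sX sX])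
  have i2: "integrable M (\<lambda>\<omega>. ?X \<omega> \<bullet> ((transpose ?L ** Y) *v w t \<omega>))" by (rule bilin(1)[OF sX sqi_w])
  have i3: "integrable M (\<lambda>\<omega>. w t \<omega> \<bullet> ((Y ** ?L) *v ?X \<omega>))" by (rule bilin(1)[OF sqi_w sX])
  have i4: "integrable M (\<lambda>\<omega>. w t \<omega> \<bullet> (Y *v w t \<omega>))" by (rule bilin(1)[OF sqi_w sqi_w])
  have v2: "integral\<^sup>L M (\<lambda>\<omega>. ?X \<omega> \<bullet> ((transpose ?L ** Y) *v w t \<omega>)) = 0"
    using bilin(2)[OF sX sqi_w] zX by simp
  have v3: "integral\<^sup>L M (\<lambda>\<omega>. w t \<omega> \<bullet> ((Y ** ?L) *v ?X \<omega>)) = 0"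
    using bilin(2)[OF sqi_w sX] zX by (simp add: mult.commute)
  have v4: "integral\<^sup>L M (\<lambda>\<omega>. w t \<omega> \<bullet> (Y *v w t \<omega>)) = sw^2 * trq Y (mat 1)"
    using bilin(2)[OF sqi_w[of t] sqi_w[of t], where Y=Y] by (simp add: Eww delta_sum)
  show ?thesis unfolding Eq_def pt L_def[symmetric] using i1 i2 i3 i4 v2 v3 v4 by simp
qed

lemma Eq_formula: "Eq As Bs K t Y = sx^2 * trq Y (mpow (As - Bs ** K) t) + sw^2 * (\<Sum>s<t. trq Y (mpow (As - Bs ** K) s))"
proof (induction t arbitrary: Y)
  case 0 then show ?case by (simp add: Eq0)
next
  case (Suc t)
  show ?case by (simp add: EqSuc Suc.IH trq_conj sum.lessThan_Suc_shift algebra_simps del: sum.lessThan_Suc)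
qed

lemma cost_formula:
  fixes As :: "real^'n^'n" and Bs :: "real^'m^'n" and K :: "real^'n^'m" and Q :: "real^'n^'n" and R :: "real^'m^'m"
  assumes rho: "0 \<le> \<rho>" "\<rho> < 1"
    and dec: "\<And>s x. (norm (mpow (As - Bs ** K) s *v x))^2 \<le> C * \<rho>^s * (norm x)^2"
  shows "summable (\<lambda>s. trq (Q + transpose K ** R ** K) (mpow (As - Bs ** K) s))"
    "lqr_cost M As Bs Q R x0 w K = sw^2 * (\<Sum>s. trq (Q + transpose K ** R ** K) (mpow (As - Bs ** K) s))"
proof -
  define Y where "Y = Q + transpose K ** R ** K"
  define a where "a s = trq Y (mpow (As - Bs ** K) s)" for s
  have ab: "norm (a s) \<le> (real CARD('n) * specnorm Y * C) * \<rho>^s" for s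
    using trq_bound[of "mpow (As - Bs ** K) s" "C * \<rho>^s" Y, OF dec] by (simp add: a_def mult_ac)
  have sg: "summable (\<lambda>s. (real CARD('n) * specnorm Y * C) * \<rho>^s)"
    using rho by (intro summable_mult summable_geometric) simp
  have sa: "summable a" by (rule summable_comparison_test[OF _ sg]) (use ab in blast)
  then show "summable (\<lambda>s. trq (Q + transpose K ** R ** K) (mpow (As - Bs ** K) s))" unfolding a_def Y_def .
  have a0: "a \<longlonglongrightarrow> 0" by (rule summable_LIMSEQ_zero[OF sa])
  have ps: "(\<lambda>t. \<Sum>s<t. a s) \<longlonglongrightarrow> suminf a" by (rule summable_LIMSEQ[OF sa])
  have Eqf: "Eq As Bs K t Y = sx^2 * a t + sw^2 * (\<Sum>s<t. a s)" for t by (simp add: Eq_formula a_def)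
  have "(\<lambda>t. sx^2 * a t + sw^2 * (\<Sum>s<t. a s)) \<longlonglongrightarrow> sx^2 * 0 + sw^2 * suminf a"
    by (intro tendsto_intros a0 ps)
  then have cE: "(\<lambda>t. Eq As Bs K t Y) \<longlonglongrightarrow> sw^2 * suminf a" by (simp add: Eqf)
  have integrand: "(let x = clx As Bs K x0 w t \<omega>; u = - (K *v x) in x \<bullet> (Q *v x) + u \<bullet> (R *v u))
     = clx As Bs K x0 w t \<omega> \<bullet> (Y *v clx As Bs K x0 w t \<omega>)" for t \<omega>
    by (simp add: Let_def Y_def matrix_vector_mult_add_rdistrib matrix_vector_mul_assoc[symmetric] inner_add_right tdot2 mv_neg del: clx.simps)
  have "lqr_cost M As Bs Q R x0 w K = lim (\<lambda>T. (1 / real T) * (\<Sum>t<T. Eq As Bs K t Y))"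
    unfolding lqr_cost_def integrand Eq_def ..
  also have "\<dots> = sw^2 * suminf a" by (rule limI[OF cesaro[OF cE]])
  finally show "lqr_cost M As Bs Q R x0 w K = sw^2 * (\<Sum>s. trq (Q + transpose K ** R ** K) (mpow (As - Bs ** K) s))"
    unfolding a_def Y_def .
qed

end


lemma qform2:
  fixes P :: "real^'n^'n"
  assumes "symf P"
  shows "(\<alpha> *\<^sub>R a + \<beta> *\<^sub>R b) \<bullet> (P *v (\<alpha> *\<^sub>R a + \<beta> *\<^sub>R b))
    = \<alpha>^2 * (a \<bullet> (P *v a)) + 2 * \<alpha> * \<beta> * (a \<bullet> (P *v b)) + \<beta>^2 * (b \<bullet> (P *v b))"
proof -
  have s: "b \<bullet> (P *v a) = a \<bullet> (P *v b)" using symf_D[OF assms] by simp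
  show ?thesis
    by (simp add: matrix_vector_right_distrib matrix_vector_mult_scaleR inner_add_left inner_add_right s power2_eq_square algebra_simps)
qed

lemma schur_from_lyap:
  fixes L P :: "real^'n^'n"
  assumes sP: "symf P" and pd: "\<And>x. (norm x)^2 \<le> x \<bullet> (P *v x)"
    and dec: "\<And>x. (L *v x) \<bullet> (P *v (L *v x)) \<le> \<rho> * (x \<bullet> (P *v x))" and r: "\<rho> < 1"
  shows "schur_stable L"
  unfolding schur_stable_def
proof (intro allI impI, elim conjE)
  fix c :: complex and v :: "complex^'n"
  assume v0: "v \<noteq> 0" and ev: "cmat L *v v = c *s v"
  define a where "a = (\<chi> i. Re (v $ i))"
  define b where "b = (\<chi> i. Im (v $ i))"
  have ca: "L *v a = Re c *\<^sub>R a + (- Im c) *\<^sub>R b"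
  proof -
    have "(L *v a) $ i = Re ((cmat L *v v) $ i)" for i
      by (simp add: a_def cmat_def matrix_vector_mult_def)
    then show ?thesis using ev by (simp add: vec_eq_iff a_def b_def)
  qed
  have cb: "L *v b = Im c *\<^sub>R a + Re c *\<^sub>R b"
  proof -
    have "(L *v b) $ i = Im ((cmat L *v v) $ i)" for i
      by (simp add: b_def cmat_def matrix_vector_mult_def)
    then show ?thesis using ev by (simp add: vec_eq_iff a_def b_def algebra_simps)
  qed
  let ?V = "\<lambda>x. x \<bullet> (P *v x)"
  have "?V (L *v a) + ?V (L *v b) = ((Re c)^2 + (Im c)^2) * (?V a + ?V b)"
    unfolding ca cb qform2[OF sP] by (simp add: algebra_simps power2_eq_square)
  also have "(Re c)^2 + (Im c)^2 = (cmod c)^2" by (simp add: cmod_power2)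
  finally have e: "?V (L *v a) + ?V (L *v b) = (cmod c)^2 * (?V a + ?V b)" .
  have pos: "?V a + ?V b > 0"
  proof -
    obtain i where "v $ i \<noteq> 0" using v0 by (auto simp: vec_eq_iff)
    then have "a \<noteq> 0 \<or> b \<noteq> 0" by (auto simp: a_def b_def vec_eq_iff complex_eq_iff)
    then have "(norm a)^2 + (norm b)^2 > 0" by (auto simp: add_pos_nonneg add_nonneg_pos)
    then show ?thesis using pd[of a] pd[of b] by linarith
  qed
  have "(cmod c)^2 * (?V a + ?V b) \<le> \<rho> * (?V a + ?V b)" using e dec[of a] dec[of b] by (simp add: algebra_simps)
  then have "(cmod c)^2 \<le> \<rho>" using pos by simp
  then have "(cmod c)^2 < 1" using r by simp
  then show "cmod c < 1" by (simp add: power_less_one_iff abs_square_less_1)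
qed

lemma mpow_decay:
  fixes L P :: "real^'n^'n"
  assumes pd: "\<And>x. (norm x)^2 \<le> x \<bullet> (P *v x)" and up: "\<And>x. x \<bullet> (P *v x) \<le> c * (norm x)^2"
    and dec: "\<And>x. (L *v x) \<bullet> (P *v (L *v x)) \<le> \<rho> * (x \<bullet> (P *v x))" and r: "0 \<le> \<rho>"
  shows "(norm (mpow L s *v x))^2 \<le> c * \<rho>^s * (norm x)^2"
proof -
  have V: "(mpow L s *v x) \<bullet> (P *v (mpow L s *v x)) \<le> \<rho>^s * (x \<bullet> (P *v x))"
  proof (induction s)
    case 0 then show ?case by simp
  next
    case (Suc s)
    have "(mpow L (Suc s) *v x) \<bullet> (P *v (mpow L (Suc s) *v x)) \<le> \<rho> * ((mpow L s *v x) \<bullet> (P *v (mpow L s *v x)))"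
      using dec[of "mpow L s *v x"] by (simp add: matrix_vector_mul_assoc[symmetric])
    also have "\<dots> \<le> \<rho> * (\<rho>^s * (x \<bullet> (P *v x)))" using Suc.IH r by (rule mult_left_mono)
    finally show ?case by (simp add: mult_ac)
  qed
  have "(norm (mpow L s *v x))^2 \<le> \<rho>^s * (x \<bullet> (P *v x))" using pd[of "mpow L s *v x"] V by linarith
  also have "\<dots> \<le> \<rho>^s * (c * (norm x)^2)" using up r by (intro mult_left_mono) auto
  finally show ?thesis by (simp add: mult_ac)
qed

lemma frob_swap:
  fixes Z :: "real^'c^'r"
  shows "(\<Sum>i\<in>UNIV. (norm (Z *v axis i 1))^2) = (\<Sum>j\<in>UNIV. (norm (transpose Z *v axis j 1))^2)"
proof -
  have a: "(norm (Z *v axis i 1))^2 = (\<Sum>j\<in>UNIV. (Z $ j $ i)^2)" for i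
    unfolding power2_norm_eq_inner by (simp add: inner_vec_def matrix_vector_mult_basis column_def power2_eq_square)
  have b: "(norm (transpose Z *v axis j 1))^2 = (\<Sum>i\<in>UNIV. (Z $ j $ i)^2)" for j
    unfolding power2_norm_eq_inner by (simp add: inner_vec_def matrix_vector_mult_basis column_def transpose_def power2_eq_square)
  show ?thesis unfolding a b by (rule sum.swap)
qed

context lq
begin

lemma star_K:
  assumes F: "psdf F"
  shows "x \<bullet> (ric F *v x) + ((K - gain F) *v x) \<bullet> (G F *v ((K - gain F) *v x))
    = x \<bullet> (Q *v x) + (K *v x) \<bullet> (R *v (K *v x)) + ((A - B ** K) *v x) \<bullet> (F *v ((A - B ** K) *v x))"
  using star[OF F, of x "K *v x"]
  by (simp add: matrix_vector_mult_diff_rdistrib matrix_vector_mul_assoc[symmetric])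

lemma G_nonneg: "psdf F \<Longrightarrow> 0 \<le> z \<bullet> (G F *v z)"
  using G_ge[of F z] by (meson order_trans zero_le_power2)

lemma R_nonneg: "0 \<le> z \<bullet> (R *v z)"
  using RI[of z] by (meson order_trans zero_le_power2)

lemma ric_le:
  assumes F: "psdf F"
  shows "x \<bullet> (ric F *v x) \<le> x \<bullet> (Q *v x) + (K *v x) \<bullet> (R *v (K *v x)) + ((A - B ** K) *v x) \<bullet> (F *v ((A - B ** K) *v x))"
  using star_K[OF F, of x K] G_nonneg[OF F, of "(K - gain F) *v x"] by linarith

lemma ric_eq:
  assumes F: "psdf F"
  shows "x \<bullet> (ric F *v x) = x \<bullet> (Q *v x) + (gain F *v x) \<bullet> (R *v (gain F *v x)) + ((A - B ** gain F) *v x) \<bullet> (F *v ((A - B ** gain F) *v x))"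
  using star_K[OF F, of x "gain F"] by simp

lemma ric_ge_Q:
  assumes F: "psdf F"
  shows "x \<bullet> (Q *v x) \<le> x \<bullet> (ric F *v x)"
  using ric_eq[OF F, of x] R_nonneg[of "gain F *v x"] F
  by (simp add: psdf_def)

lemma ric_psdf: "psdf F \<Longrightarrow> psdf (ric F)"
  using ric_sym ric_ge_Q QI unfolding psdf_def
  by (meson order_trans zero_le_power2)

lemma G_inv_norm:
  assumes F: "psdf F"
  shows "smin R * norm (matrix_inv (G F) *v y) \<le> norm y"
proof -
  define z where "z = matrix_inv (G F) *v y"
  have Gz: "G F *v z = y" by (simp add: z_def G_inv(1)[OF F])
  have "smin R * (norm z)^2 \<le> z \<bullet> (R *v z)" by (rule smin_lower[OF Rsym R_nonneg])
  also have "\<dots> \<le> z \<bullet> (G F *v z)" by (rule G_ge_R[OF F])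
  also have "\<dots> = z \<bullet> y" by (simp add: Gz)
  also have "\<dots> \<le> norm z * norm y" by (simp add: Cauchy_Schwarz_ineq2 abs_le_D1)
  finally have h: "smin R * (norm z)^2 \<le> norm z * norm y" .
  show ?thesis
  proof (cases "z = 0")
    case True then show ?thesis by (simp add: z_def[symmetric])
  next
    case False
    then have "norm z > 0" by simp
    then show ?thesis using h unfolding z_def[symmetric] by (simp add: power2_eq_square mult_ac)
  qed
qed

end


lemma arith_h:
  fixes P U s eta :: real
  assumes P: "P \<ge> 1" and U: "U \<ge> P" and s: "s \<ge> 1" and e0: "eta \<ge> 0"
    and e: "eta \<le> s / (40 * U^4 * (P * sqrt P))"
  shows "P^2 * U^4 * (eta / s)^2 * (1600 * P^2) \<le> 1"
proof -
  define r where "r = eta / s"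
  have r0: "r \<ge> 0" using e0 s by (simp add: r_def)
  have U1: "U \<ge> 1" using P U by simp
  have sq: "sqrt P > 0" using P by simp
  have den: "40 * U^4 * (P * sqrt P) > 0" using P U1 sq by simp
  have "r \<le> 1 / (40 * U^4 * (P * sqrt P))" using e s by (simp add: r_def divide_le_eq field_simps)
  then have "40 * U^4 * (P * sqrt P) * r \<le> 1" using den by (simp add: field_simps)
  moreover have "0 \<le> 40 * U^4 * (P * sqrt P) * r" using den r0 by simp
  ultimately have "(40 * U^4 * (P * sqrt P) * r)^2 \<le> 1" by (simp add: power_le_one)
  also have "(40 * U^4 * (P * sqrt P) * r)^2 = 1600 * U^8 * P^3 * r^2"
    using P by (simp add: power_mult_distrib power2_eq_square[of "sqrt P"] power2_eq_square[of "U^4"])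
       (simp add: power_mult_distrib[symmetric] power_add[symmetric] power2_eq_square power3_eq_cube mult_ac)
  finally have h1: "1600 * U^8 * P^3 * r^2 \<le> 1" .
  have PU4: "P \<le> U^4"
  proof -
    have "U \<le> U^4" using U1 by (simp add: power_increasing[of 1 4 U, simplified])
    then show ?thesis using U by simp
  qed
  have "P^2 * U^4 * r^2 * (1600 * P^2) = (1600 * U^4 * P^3 * r^2) * P" by (simp add: power2_eq_square power3_eq_cube mult_ac)
  also have "\<dots> \<le> (1600 * U^4 * P^3 * r^2) * U^4" using PU4 r0 P by (intro mult_left_mono) auto
  also have "\<dots> = 1600 * U^8 * P^3 * r^2" by (simp add: power_add[symmetric] mult_ac)
  finally have "P^2 * U^4 * r^2 * (1600 * P^2) \<le> 1600 * U^8 * P^3 * r^2" .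
  then show ?thesis using h1 unfolding r_def by linarith
qed

lemma arith_rho:
  fixes P h X u v :: real
  assumes P: "P \<ge> 1" and h0: "h \<ge> 0" and h: "h * (1600 * P^2) \<le> 1" and X: "X \<ge> 0"
    and u: "u \<le> (1 - 1 / P) * X" and v: "v \<le> h * X"
  shows "(1 + 1 / (4 * P)) * u + (1 + 1 / (1 / (4 * P))) * v \<le> (1 - 1 / (2 * P)) * X"
proof -
  have P0: "P > 0" using P by simp
  have a1: "(1 + 1 / (4 * P)) * u \<le> (1 + 1 / (4 * P)) * ((1 - 1 / P) * X)"
    using u P0 by (intro mult_left_mono) auto
  have a2: "(1 + 1 / (4 * P)) * (1 - 1 / P) \<le> 1 - 3 / (4 * P)"
    using P0 by (simp add: field_simps)
  have a3: "(1 + 1 / (4 * P)) * ((1 - 1 / P) * X) \<le> (1 - 3 / (4 * P)) * X"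
    using mult_right_mono[OF a2 X] by (simp add: mult_ac)
  have b1: "(1 + 1 / (1 / (4 * P))) * v \<le> (1 + 4 * P) * (h * X)"
    using v P0 by (simp add: mult_left_mono)
  have b2: "(1 + 4 * P) * h \<le> 1 / (320 * P)"
  proof -
    have "(1 + 4 * P) * h \<le> 5 * P * h" using P h0 by (intro mult_right_mono) auto
    also have "5 * P * h \<le> 1 / (320 * P)" using h P0 by (simp add: field_simps power2_eq_square)
    finally show ?thesis .
  qed
  have b3: "(1 + 4 * P) * (h * X) \<le> (1 / (320 * P)) * X" using mult_right_mono[OF b2 X] by (simp add: mult_ac)
  have c: "(1 - 3 / (4 * P)) * X + (1 / (320 * P)) * X \<le> (1 - 1 / (2 * P)) * X"
  proof -
    have "(1 - 3 / (4 * P)) + (1 / (320 * P)) \<le> (1 - 1 / (2 * P))" using P0 by (simp add: field_simps)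
    then have "((1 - 3 / (4 * P)) + (1 / (320 * P))) * X \<le> (1 - 1 / (2 * P)) * X" using X by (rule mult_right_mono)
    then show ?thesis by (simp add: algebra_simps)
  qed
  show ?thesis using a1 a3 b1 b3 c by linarith
qed

locale lq2 = lq A B Q R for A :: "real^'n^'n" and B :: "real^'m^'n" and Q R +
  fixes Ps :: "real^'n^'n"
  assumes Ps_psd: "psdf Ps" and Ps_fix: "ric Ps = Ps"
begin

definition V where "V x = x \<bullet> (Ps *v x)"
definition Ks where "Ks = gain Ps"
definition Ls where "Ls = A - B ** Ks"

lemma Ps_sym: "symf Ps" using Ps_psd by (simp add: psdf_def)
lemma V_nonneg: "0 \<le> V x" using Ps_psd by (simp add: psdf_def V_def)

lemma V_eq: "V x = x \<bullet> (Q *v x) + (Ks *v x) \<bullet> (R *v (Ks *v x)) + V (Ls *v x)"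
  using ric_eq[OF Ps_psd, of x] by (simp add: Ps_fix V_def Ks_def Ls_def)

lemma V_le_ric: "V x \<le> x \<bullet> (Q *v x) + (K *v x) \<bullet> (R *v (K *v x)) + V ((A - B ** K) *v x)"
  using ric_le[OF Ps_psd, of x K] by (simp add: Ps_fix V_def)

lemma Q_le_V: "x \<bullet> (Q *v x) \<le> V x"
  using V_eq[of x] R_nonneg[of "Ks *v x"] V_nonneg[of "Ls *v x"] by linarith

lemma norm_le_V: "(norm x)^2 \<le> V x"
  using QI[of x] Q_le_V[of x] by linarith

lemma V_le: "V x \<le> specnorm Ps * (norm x)^2"
  unfolding V_def by (rule quad_le)

lemma P_ge1: "1 \<le> specnorm Ps"
  using norm_le_V[of "axis undefined 1"] V_le[of "axis undefined 1"] by simp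

lemma VLs: "V (Ls *v x) \<le> V x - (norm x)^2"
  using V_eq[of x] R_nonneg[of "Ks *v x"] QI[of x] by linarith

lemma ric_step:
  assumes F: "psdf F" and d: "0 \<le> \<delta>" and th: "0 \<le> \<theta>" "\<theta> \<le> 1"
    and hQ: "\<And>x. (1 - \<theta>) * V x \<le> x \<bullet> (Q *v x)"
    and hF: "\<And>x. (1 - \<delta>) * V x \<le> x \<bullet> (F *v x) \<and> x \<bullet> (F *v x) \<le> (1 + \<delta>) * V x"
  shows "(1 - \<delta> * \<theta>) * V x \<le> x \<bullet> (ric F *v x) \<and> x \<bullet> (ric F *v x) \<le> (1 + \<delta> * \<theta>) * V x"
proof
  let ?k = "Ks *v x"
  have "x \<bullet> (ric F *v x) \<le> x \<bullet> (Q *v x) + ?k \<bullet> (R *v ?k) + (Ls *v x) \<bullet> (F *v (Ls *v x))"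
    using ric_le[OF F, of x Ks] by (simp add: Ls_def)
  also have "(Ls *v x) \<bullet> (F *v (Ls *v x)) \<le> (1 + \<delta>) * V (Ls *v x)" using hF by blast
  finally have u1: "x \<bullet> (ric F *v x) \<le> x \<bullet> (Q *v x) + ?k \<bullet> (R *v ?k) + (1 + \<delta>) * V (Ls *v x)" by simp
  have u2: "V (Ls *v x) \<le> \<theta> * V x" using V_eq[of x] hQ[of x] R_nonneg[of ?k] by (simp add: algebra_simps)
  have u3: "\<delta> * V (Ls *v x) \<le> \<delta> * (\<theta> * V x)" using u2 d by (rule mult_left_mono)
  show "x \<bullet> (ric F *v x) \<le> (1 + \<delta> * \<theta>) * V x"
    using u1 u3 V_eq[of x] by (simp add: algebra_simps)
next
  let ?kF = "gain F *v x"
  let ?LF = "(A - B ** gain F) *v x"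
  have e: "x \<bullet> (ric F *v x) = x \<bullet> (Q *v x) + ?kF \<bullet> (R *v ?kF) + ?LF \<bullet> (F *v ?LF)" by (rule ric_eq[OF F])
  show "(1 - \<delta> * \<theta>) * V x \<le> x \<bullet> (ric F *v x)"
  proof (cases "\<delta> \<le> 1")
    case True
    have l1: "(1 - \<delta>) * V ?LF \<le> ?LF \<bullet> (F *v ?LF)" using hF by blast
    have l2: "(1 - \<delta>) * V x \<le> (1 - \<delta>) * (x \<bullet> (Q *v x) + ?kF \<bullet> (R *v ?kF) + V ?LF)"
      using V_le_ric[of x "gain F"] True by (intro mult_left_mono) auto
    have l3: "\<delta> * ((1 - \<theta>) * V x) \<le> \<delta> * (x \<bullet> (Q *v x))" using hQ[of x] d by (rule mult_left_mono)
    have l4: "0 \<le> \<delta> * (?kF \<bullet> (R *v ?kF))" using d R_nonneg by simp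
    show ?thesis using e l1 l2 l3 l4 by (simp add: algebra_simps)
  next
    case False
    have "x \<bullet> (Q *v x) \<le> x \<bullet> (ric F *v x)" by (rule ric_ge_Q[OF F])
    moreover have "(1 - \<delta> * \<theta>) * V x \<le> (1 - \<theta>) * V x"
    proof -
      have "\<theta> * V x \<le> \<delta> * (\<theta> * V x)" using False th V_nonneg[of x]
        by (metis mult_le_cancel_right1 mult.commute mult_nonneg_nonneg less_eq_real_def not_le)
      then show ?thesis by (simp add: algebra_simps)
    qed
    ultimately show ?thesis using hQ[of x] by linarith
  qed
qed

lemma ric_iter:
  assumes F0: "psdf F0" and d: "0 \<le> \<delta>" and th: "0 \<le> \<theta>" "\<theta> \<le> 1"
    and hQ: "\<And>x. (1 - \<theta>) * V x \<le> x \<bullet> (Q *v x)"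
    and hF: "\<And>x. (1 - \<delta>) * V x \<le> x \<bullet> (F0 *v x) \<and> x \<bullet> (F0 *v x) \<le> (1 + \<delta>) * V x"
  shows "psdf ((ric ^^ k) F0) \<and> (\<forall>x. (1 - \<delta> * \<theta>^k) * V x \<le> x \<bullet> ((ric ^^ k) F0 *v x) \<and> x \<bullet> ((ric ^^ k) F0 *v x) \<le> (1 + \<delta> * \<theta>^k) * V x)"
proof (induction k)
  case 0 then show ?case using F0 hF by simp
next
  case (Suc k)
  have F: "psdf ((ric ^^ k) F0)" using Suc.IH by blast
  have d': "0 \<le> \<delta> * \<theta>^k" using d th by simp
  have "(1 - \<delta> * \<theta>^k * \<theta>) * V x \<le> x \<bullet> (ric ((ric ^^ k) F0) *v x) \<and> x \<bullet> (ric ((ric ^^ k) F0) *v x) \<le> (1 + \<delta> * \<theta>^k * \<theta>) * V x" for x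
    by (rule ric_step[OF F d' th hQ]) (use Suc.IH in blast)
  then show ?case using ric_psdf[OF F] by (simp add: mult_ac)
qed

lemma gain_diff:
  assumes F: "psdf F"
  shows "(gain F - Ks) *v x = matrix_inv (G F) *v (transpose B *v ((F - Ps) *v (Ls *v x)))"
proof -
  define a where "a = A *v x"
  define kF where "kF = gain F *v x"
  define ks where "ks = Ks *v x"
  have GkF: "G F *v kF = transpose B *v (F *v a)" by (simp add: kF_def gainv a_def G_inv(1)[OF F])
  have Gks: "G Ps *v ks = transpose B *v (Ps *v a)" by (simp add: ks_def Ks_def gainv a_def G_inv(1)[OF Ps_psd])
  have Lsx: "Ls *v x = a - B *v ks"
    by (simp add: Ls_def a_def ks_def matrix_vector_mult_diff_rdistrib matrix_vector_mul_assoc[symmetric])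
  have "G F *v (kF - ks) = transpose B *v ((F - Ps) *v (Ls *v x))"
    using GkF Gks unfolding Lsx
    by (simp add: Gv matrix_vector_mult_diff_distrib matrix_vector_mult_diff_rdistrib algebra_simps)
  then have "kF - ks = matrix_inv (G F) *v (transpose B *v ((F - Ps) *v (Ls *v x)))"
    using G_inv(2)[OF F, of "kF - ks"] by simp
  then show ?thesis by (simp add: kF_def ks_def matrix_vector_mult_diff_rdistrib)
qed

lemma V_sub:
  assumes t: "t > 0"
  shows "V (a - b) \<le> (1 + t) * V a + (1 + 1 / t) * V b"
proof -
  have e1: "V (a - b) = V a - 2 * (b \<bullet> (Ps *v a)) + V b"
    using quad_expand[OF Ps_sym, of a "-1" b] by (simp add: V_def)
  have "0 \<le> V (b + t *\<^sub>R a)" by (rule V_nonneg)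
  also have "V (b + t *\<^sub>R a) = V b + 2 * t * (b \<bullet> (Ps *v a)) + t^2 * V a"
    using quad_expand[OF Ps_sym, of b t a] symf_D[OF Ps_sym, of a b] by (simp add: V_def)
  finally have "- 2 * t * (b \<bullet> (Ps *v a)) \<le> V b + t^2 * V a" by simp
  then have "- 2 * (b \<bullet> (Ps *v a)) \<le> V b / t + t * V a"
    using t by (simp add: field_simps power2_eq_square)
  then show ?thesis using e1 by (simp add: algebra_simps)
qed

lemma Bt_norm: "norm (transpose B *v y) \<le> specnorm B * norm y"
proof -
  have "(norm (transpose B *v y))^2 \<le> (specnorm B)^2 * (norm y)^2"
  proof (rule transp_norm)
    fix x
    have "(norm (B *v x))^2 \<le> (specnorm B * norm x)^2" by (rule power_mono[OF norm_mv norm_ge_zero])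
    then show "(norm (B *v x))^2 \<le> (specnorm B)^2 * (norm x)^2" by (simp add: power_mult_distrib)
  qed
  then have "(norm (transpose B *v y))^2 \<le> (specnorm B * norm y)^2" by (simp add: power_mult_distrib)
  then show ?thesis by (rule power2_le_imp_le) (simp add: specnorm_nonneg)
qed

lemma B_norm2: "(norm (B *v z))^2 \<le> (specnorm B)^2 * (norm z)^2"
proof -
  have "(norm (B *v z))^2 \<le> (specnorm B * norm z)^2" by (rule power_mono[OF norm_mv norm_ge_zero])
  then show ?thesis by (simp add: power_mult_distrib)
qed

lemma Ls_norm2: "(norm (Ls *v x))^2 \<le> specnorm Ps * (norm x)^2"
  using norm_le_V[of "Ls *v x"] VLs[of x] V_le[of x] by (smt (verit) zero_le_power2)

lemma perturb:
  fixes F :: "real^'n^'n" and Ups eta :: real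
  assumes F: "psdf F" and e0: "eta \<ge> 0" and D: "\<And>x. norm ((F - Ps) *v x) \<le> eta * norm x"
    and nB: "specnorm B \<le> Ups" and nP: "specnorm Ps \<le> Ups"
    and small: "eta \<le> smin R / (40 * Ups^4 * (specnorm Ps * sqrt (specnorm Ps)))"
  shows "\<And>x. (norm ((gain F - Ks) *v x))^2 \<le> Ups^2 * eta^2 * specnorm Ps * (norm x)^2"
    and "\<And>x. V ((A - B ** gain F) *v x) \<le> (1 - 1 / (2 * specnorm Ps)) * V x"
proof -
  define P where "P = specnorm Ps"
  define sR where "sR = smin R"
  have P1: "P \<ge> 1" using P_ge1 by (simp add: P_def)
  have sR1: "sR \<ge> 1" unfolding sR_def by (rule smin_ge1[OF RI])
  have U1: "Ups \<ge> 1" using P1 nP by (simp add: P_def)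
  have sB0: "0 \<le> specnorm B" by (rule specnorm_nonneg)
  have dKs: "(norm ((gain F - Ks) *v x))^2 \<le> Ups^2 * (eta / sR)^2 * P * (norm x)^2" for x
  proof -
    have "sR * norm ((gain F - Ks) *v x) \<le> norm (transpose B *v ((F - Ps) *v (Ls *v x)))"
      unfolding gain_diff[OF F] sR_def by (rule G_inv_norm[OF F])
    also have "\<dots> \<le> specnorm B * norm ((F - Ps) *v (Ls *v x))" by (rule Bt_norm)
    also have "\<dots> \<le> Ups * (eta * norm (Ls *v x))"
      using D[of "Ls *v x"] nB sB0 by (intro mult_mono) auto
    finally have h: "sR * norm ((gain F - Ks) *v x) \<le> Ups * eta * norm (Ls *v x)" by (simp add: mult_ac)
    then have "norm ((gain F - Ks) *v x) \<le> Ups * (eta / sR) * norm (Ls *v x)"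
      using sR1 by (simp add: field_simps)
    then have "(norm ((gain F - Ks) *v x))^2 \<le> (Ups * (eta / sR) * norm (Ls *v x))^2"
      by (rule power_mono) simp
    also have "\<dots> = Ups^2 * (eta / sR)^2 * (norm (Ls *v x))^2" by (simp add: power_mult_distrib power_divide)
    also have "\<dots> \<le> Ups^2 * (eta / sR)^2 * (P * (norm x)^2)"
      using Ls_norm2[of x] by (intro mult_left_mono) (auto simp: P_def)
    finally show ?thesis by (simp add: mult_ac)
  qed
  show "(norm ((gain F - Ks) *v x))^2 \<le> Ups^2 * eta^2 * specnorm Ps * (norm x)^2" for x
  proof -
    have "(eta / sR)^2 \<le> eta^2" using sR1 e0 by (simp add: power_divide divide_le_eq) (simp add: power_increasing[of 1 2 sR, simplified] mult_le_cancel_left1 power_mono[of 1 sR 2, simplified] mult_left_le)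
    then have "Ups^2 * (eta / sR)^2 * P * (norm x)^2 \<le> Ups^2 * eta^2 * P * (norm x)^2"
      using P1 by (intro mult_right_mono mult_left_mono) auto
    then show ?thesis using dKs[of x] by (simp add: P_def)
  qed
  show "V ((A - B ** gain F) *v x) \<le> (1 - 1 / (2 * specnorm Ps)) * V x" for x
  proof -
    define h where "h = P^2 * Ups^4 * (eta / sR)^2"
    have h0: "h \<ge> 0" by (simp add: h_def)
    have hb: "h * (1600 * P^2) \<le> 1"
      unfolding h_def by (rule arith_h[OF P1 _ sR1 e0]) (use nP small in \<open>auto simp: P_def sR_def\<close>)
    have Lm: "(A - B ** gain F) *v x = Ls *v x - B *v ((gain F - Ks) *v x)"
      by (simp add: Ls_def matrix_vector_mult_diff_rdistrib matrix_vector_mul_assoc[symmetric] matrix_vector_mult_diff_distrib)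
    have t0: "(1 / (4 * P)) > 0" using P1 by simp
    have vs: "V ((A - B ** gain F) *v x) \<le> (1 + 1 / (4 * P)) * V (Ls *v x) + (1 + 1 / (1 / (4 * P))) * V (B *v ((gain F - Ks) *v x))"
      unfolding Lm by (rule V_sub[OF t0])
    have u: "V (Ls *v x) \<le> (1 - 1 / P) * V x"
    proof -
      have "V x \<le> P * (norm x)^2" using V_le by (simp add: P_def)
      then have "V x / P \<le> (norm x)^2" using P1 by (simp add: field_simps)
      then show ?thesis using VLs[of x] P1 by (simp add: algebra_simps)
    qed
    have v: "V (B *v ((gain F - Ks) *v x)) \<le> h * V x"
    proof -
      let ?z = "(gain F - Ks) *v x"
      have "V (B *v ?z) \<le> P * (norm (B *v ?z))^2" using V_le by (simp add: P_def)
      also have "\<dots> \<le> P * (Ups^2 * (norm ?z)^2)"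
      proof (intro mult_left_mono)
        have "(specnorm B)^2 \<le> Ups^2" using nB sB0 by (rule power_mono)
        then show "(norm (B *v ?z))^2 \<le> Ups^2 * (norm ?z)^2"
          using B_norm2[of ?z] by (meson mult_right_mono order_trans zero_le_power2)
      qed (use P1 in auto)
      also have "\<dots> \<le> P * (Ups^2 * (Ups^2 * (eta / sR)^2 * P * (norm x)^2))"
        using dKs[of x] P1 by (intro mult_left_mono) auto
      also have "\<dots> = h * (norm x)^2" by (simp add: h_def power2_eq_square eval_nat_numeral mult_ac)
      also have "\<dots> \<le> h * V x" using norm_le_V h0 by (rule mult_left_mono)
      finally show ?thesis .
    qed
    have "(1 + 1 / (4 * P)) * V (Ls *v x) + (1 + 1 / (1 / (4 * P))) * V (B *v ((gain F - Ks) *v x)) \<le> (1 - 1 / (2 * P)) * V x"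
      by (rule arith_rho[OF P1 h0 hb V_nonneg u v])
    then show ?thesis using vs by (simp add: P_def)
  qed
qed

definition W where "W z = z \<bullet> (G Ps *v z)"

definition wt where "wt K s = (\<Sum>i\<in>UNIV. W ((K - Ks) *v (mpow (A - B ** K) s *v axis i 1)))"

lemma trq_V: "trq Ps X = (\<Sum>i\<in>UNIV. V (X *v axis i 1))"
  by (simp add: trq_def V_def)

lemma W_le: "W z \<le> (specnorm R + Ups^3) * (norm z)^2"
  if nB: "specnorm B \<le> Ups" and nP: "specnorm Ps \<le> Ups" for Ups
proof -
  have P1: "1 \<le> specnorm Ps" by (rule P_ge1)
  have "W z = z \<bullet> (R *v z) + V (B *v z)" by (simp add: W_def Gv inner_add_right tdot2 V_def)
  also have "z \<bullet> (R *v z) \<le> specnorm R * (norm z)^2" by (rule quad_le)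
  also have "V (B *v z) \<le> specnorm Ps * (norm (B *v z))^2" by (rule V_le)
  also have "\<dots> \<le> Ups * (Ups^2 * (norm z)^2)"
  proof (rule mult_mono)
    have "(specnorm B)^2 \<le> Ups^2" using nB specnorm_nonneg by (rule power_mono)
    then show "(norm (B *v z))^2 \<le> Ups^2 * (norm z)^2"
      using B_norm2[of z] by (meson mult_right_mono order_trans zero_le_power2)
  qed (use nP P1 in auto)
  finally show ?thesis by (simp add: algebra_simps power2_eq_square power3_eq_cube)
qed

lemma wt_bound:
  fixes K :: "real^'n^'m"
  assumes nB: "specnorm B \<le> Ups" and nP: "specnorm Ps \<le> Ups"
    and dK: "\<And>x. (norm ((K - Ks) *v x))^2 \<le> c1 * (norm x)^2"
    and dec: "\<And>x. (norm (mpow (A - B ** K) s *v x))^2 \<le> c2 * (norm x)^2"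
    and c1: "c1 \<ge> 0"
  shows "wt K s \<le> (specnorm R + Ups^3) * (real CARD('m) * (c1 * c2))"
proof -
  define X where "X = mpow (A - B ** K) s"
  define Z where "Z = (K - Ks) ** X"
  have cG: "0 \<le> specnorm R + Ups^3"
    using specnorm_nonneg[of R] nP P_ge1 by (smt (verit) one_le_power)
  have Zb: "(norm (Z *v x))^2 \<le> (c1 * c2) * (norm x)^2" for x
  proof -
    have "(norm (Z *v x))^2 \<le> c1 * (norm (X *v x))^2" using dK[of "X *v x"] by (simp add: Z_def matrix_vector_mul_assoc[symmetric])
    also have "\<dots> \<le> c1 * (c2 * (norm x)^2)" using dec[of x] c1 by (intro mult_left_mono) (auto simp: X_def)
    finally show ?thesis by (simp add: mult_ac)
  qed
  have "wt K s \<le> (\<Sum>i\<in>UNIV. (specnorm R + Ups^3) * (norm (Z *v axis i 1))^2)"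
    unfolding wt_def
    by (rule sum_mono) (simp add: W_le[OF nB nP] Z_def X_def matrix_vector_mul_assoc[symmetric])
  also have "\<dots> = (specnorm R + Ups^3) * (\<Sum>j\<in>UNIV. (norm (transpose Z *v axis j 1))^2)"
    unfolding sum_distrib_left[symmetric] by (rule arg_cong[where f="(*) (specnorm R + Ups^3)"], rule frob_swap)
  also have "\<dots> \<le> (specnorm R + Ups^3) * (\<Sum>j\<in>(UNIV::'m set). c1 * c2)"
  proof (intro mult_left_mono sum_mono)
    fix j :: 'm
    show "(norm (transpose Z *v axis j 1))^2 \<le> c1 * c2" using transp_norm[OF Zb, of "axis j 1"] by simp
  qed (rule cG)
  finally show ?thesis by simp
qed

end


context lq2
begin

lemma cost_split:
  fixes K :: "real^'n^'m"
  assumes r: "0 \<le> \<rho>" "\<rho> < 1"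
    and dec: "\<And>s x. (norm (mpow (A - B ** K) s *v x))^2 \<le> specnorm Ps * \<rho>^s * (norm x)^2"
    and sa: "summable (\<lambda>s. trq (Q + transpose K ** R ** K) (mpow (A - B ** K) s))"
  shows "wt K sums ((\<Sum>s. trq (Q + transpose K ** R ** K) (mpow (A - B ** K) s)) - trq Ps (mat 1))"
proof -
  define L where "L = A - B ** K"
  define a where "a s = trq (Q + transpose K ** R ** K) (mpow L s)" for s
  define f where "f s = trq Ps (mpow L s)" for s
  have pt: "y \<bullet> ((Q + transpose K ** R ** K) *v y) = V y - V (L *v y) + W ((K - Ks) *v y)" for y
  proof -
    have e: "y \<bullet> ((Q + transpose K ** R ** K) *v y) = y \<bullet> (Q *v y) + (K *v y) \<bullet> (R *v (K *v y))"
      by (simp only: matrix_vector_mult_add_rdistrib matrix_vector_mul_assoc[symmetric] inner_add_right tdot2)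
    have s: "V y + W ((K - Ks) *v y) = y \<bullet> (Q *v y) + (K *v y) \<bullet> (R *v (K *v y)) + V (L *v y)"
      using star_K[OF Ps_psd, of y K] unfolding Ps_fix Ks_def[symmetric] L_def[symmetric] V_def W_def .
    show ?thesis using e s by linarith
  qed
  have aeq: "a s = f s - f (Suc s) + wt K s" for s
  proof -
    have "a s = (\<Sum>i\<in>UNIV. V (mpow L s *v axis i 1) - V (L *v (mpow L s *v axis i 1)) + W ((K - Ks) *v (mpow L s *v axis i 1)))"
      unfolding a_def trq_def by (simp only: pt)
    also have "\<dots> = f s - f (Suc s) + wt K s"
      by (simp only: sum.distrib sum_subtractf f_def trq_V wt_def L_def[symmetric] mpow.simps matrix_vector_mul_assoc[symmetric])
    finally show ?thesis .
  qed
  have fb: "norm (f s) \<le> (real CARD('n) * (specnorm Ps * specnorm Ps)) * \<rho>^s" for s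
  proof -
    have d: "(norm (mpow L s *v x))^2 \<le> (specnorm Ps * \<rho>^s) * (norm x)^2" for x
      using dec[of s x] unfolding L_def by (simp only: mult.assoc)
    have "\<bar>trq Ps (mpow L s)\<bar> \<le> real CARD('n) * (specnorm Ps * (specnorm Ps * \<rho>^s))"
      by (rule trq_bound[OF d])
    then show ?thesis unfolding f_def real_norm_def by (simp only: mult.assoc)
  qed
  have "(\<lambda>s. (real CARD('n) * (specnorm Ps * specnorm Ps)) * \<rho>^s) \<longlonglongrightarrow> 0"
    by (rule tendsto_mult_right_zero, rule LIMSEQ_power_zero) (use r in simp)
  moreover have "eventually (\<lambda>s. norm (f s) \<le> (real CARD('n) * (specnorm Ps * specnorm Ps)) * \<rho>^s) sequentially"
    using fb by (intro always_eventually allI)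
  ultimately have f0: "f \<longlonglongrightarrow> 0" by (intro Lim_null_comparison[of f]) auto
  have tele: "(\<lambda>s. f s - f (Suc s)) sums (f 0 - 0)" by (rule telescope_sums'[OF f0])
  have h1: "(\<lambda>s. a s - (f s - f (Suc s))) sums (suminf a - (f 0 - 0))"
  proof (rule sums_diff[OF summable_sums tele])
    show "summable a" unfolding a_def L_def by (rule sa)
  qed
  have h2: "(\<lambda>s. a s - (f s - f (Suc s))) = wt K"
  proof (rule ext)
    fix s show "a s - (f s - f (Suc s)) = wt K s" using aeq[of s] by linarith
  qed
  have h3: "wt K sums (suminf a - f 0)" using h1 unfolding h2 by simp
  have h4: "f 0 = trq Ps (mat 1)" unfolding f_def by simp
  have h5: "suminf a = (\<Sum>s. trq (Q + transpose K ** R ** K) (mpow (A - B ** K) s))" unfolding a_def L_def ..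
  show ?thesis using h3 unfolding h4 h5 .
qed

end


lemma final_arith:
  fixes P Ups m sw cG eta :: real
  assumes P1: "P \<ge> 1" and PU: "P \<le> Ups" and m: "m \<ge> 0" and cG: "cG \<ge> 0"
  shows "sw^2 * (cG * (m * (Ups^2 * eta^2 * P * P)) * (2 * P))
      \<le> 32 * m * sw^2 * Ups^4 * (sqrt P + 1)^2 * P * cG * eta^2"
proof -
  have U0: "Ups \<ge> 0" using P1 PU by simp
  have "P^2 \<le> Ups^2" using P1 PU by (intro power_mono) auto
  then have a: "Ups^2 * P^2 \<le> Ups^4"
    using mult_left_mono[of "P^2" "Ups^2" "Ups^2"] by (simp add: power2_eq_square eval_nat_numeral mult_ac)
  have b: "1 \<le> (sqrt P + 1)^2" by (rule one_le_power) (use P1 in simp)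
  have "2 * (Ups^2 * P^2) \<le> 32 * (Ups^4 * (sqrt P + 1)^2)"
  proof -
    have "Ups^4 \<le> Ups^4 * (sqrt P + 1)^2" using b U0 by (simp add: mult_le_cancel_left1)
    moreover have "0 \<le> Ups^4 * (sqrt P + 1)^2" by simp
    ultimately show ?thesis using a by linarith
  qed
  then have c: "2 * (Ups^2 * P^2) * (P * (m * sw^2 * cG * eta^2)) \<le> 32 * (Ups^4 * (sqrt P + 1)^2) * (P * (m * sw^2 * cG * eta^2))"
    using P1 m cG by (intro mult_right_mono) auto
  have l: "sw^2 * (cG * (m * (Ups^2 * eta^2 * P * P)) * (2 * P)) = 2 * (Ups^2 * P^2) * (P * (m * sw^2 * cG * eta^2))"
    by (simp add: power2_eq_square mult_ac)
  have r: "32 * m * sw^2 * Ups^4 * (sqrt P + 1)^2 * P * cG * eta^2 = 32 * (Ups^4 * (sqrt P + 1)^2) * (P * (m * sw^2 * cG * eta^2))"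
    by (simp only: mult_ac)
  show ?thesis using c unfolding l r .
qed

theorem theorem1:
  fixes As Ps P Q :: "real^'n^'n" and Bs :: "real^'m^'n" and R :: "real^'m^'m"
    and Kmpc Ks :: "real^'n^'m"
    and M :: "'a measure" and x0 :: "'a \<Rightarrow> real^'n" and w :: "nat \<Rightarrow> 'a \<Rightarrow> real^'n"
    and sw sx Ups em ep beta :: real and N :: nat
  assumes noise: "noise_model M sw sx x0 w"
    and mn: "CARD('m) \<le> CARD('n)"
    and Rpd: "pd R" and RI: "psd (R - mat 1)"
    and Qpsd: "psd Q" and QI: "psd (Q - mat 1)"
    and stab: "stabilizable As Bs"
    and Ps_pd: "pd Ps" and Ps_fix: "Ps = riccati As Bs Q R Ps"
    and Ks_def: "Ks = gainK As Bs R Ps"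
    and beta_def: "beta = specnorm Ps / smin Q"
    and em: "em \<ge> 0" and Ups: "Ups \<ge> max 1 em"
    and nA: "specnorm As \<le> Ups" and nB: "specnorm Bs \<le> Ups" and nP: "specnorm Ps \<le> Ups"
    and N: "N \<ge> 1"
    and P: "psd P" and Perr: "specnorm (P - Ps) \<le> ep"
    and Kmpc_def: "Kmpc = gainK As Bs R ((riccati As Bs Q R ^^ (N - 1)) P)"
    and c1: "Ups \<ge> beta * (1 - 1 / beta) ^ (N - 1) * ep"
    and c2: "em + beta * (1 - 1 / beta) ^ (N - 1) * ep
               \<le> smin R / (40 * Ups ^ 4 * specnorm Ps powr (3 / 2))"
  shows "schur_stable (As - Bs ** Kmpc) \<and>
    lqr_cost M As Bs Q R x0 w Kmpc - lqr_cost M As Bs Q R x0 w Ks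
      \<le> 32 * real CARD('m) * sw ^ 2 * Ups ^ 4 * (sqrt (specnorm Ps) + 1) ^ 2 * specnorm Ps
         * (specnorm R + Ups ^ 3) * beta ^ 2 * (1 - 1 / beta) ^ (2 * (N - 1)) * ep ^ 2"
proof -
  have Rsym: "symf R" using Rpd by (simp add: pd_def symf_T)
  have Qsym: "symf Q" using Qpsd by (simp add: psd_def symf_T)
  have RIv: "(norm z)^2 \<le> z \<bullet> (R *v z)" for z
    using RI by (auto simp: psd_def matrix_vector_mult_diff_rdistrib inner_diff_right power2_norm_eq_inner)
  have QIv: "(norm z)^2 \<le> z \<bullet> (Q *v z)" for z
    using QI by (auto simp: psd_def matrix_vector_mult_diff_rdistrib inner_diff_right power2_norm_eq_inner)
  interpret L0: lq As Bs Q R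
    by unfold_locales (use Rsym Qsym RIv QIv in auto)
  have Ps_psdf: "psdf Ps"
    unfolding psdf_def
  proof
    show "symf Ps" using Ps_pd by (simp add: pd_def symf_T)
    show "\<forall>x. 0 \<le> x \<bullet> (Ps *v x)" using Ps_pd unfolding pd_def by (metis inner_zero_left less_eq_real_def)
  qed
  have Ps_fix': "L0.ric Ps = Ps" using Ps_fix by (simp add: L0.ric_def)
  interpret L: lq2 As Bs Q R Ps
    by unfold_locales (use Ps_psdf Ps_fix' in auto)
  define Pn where "Pn = specnorm Ps"
  define sQ where "sQ = smin Q"
  define \<theta> where "\<theta> = 1 - 1 / beta"
  have P1: "Pn \<ge> 1" using L.P_ge1 by (simp add: Pn_def)
  have sQ1: "sQ \<ge> 1" unfolding sQ_def by (rule smin_ge1[OF QIv])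
  have Qlow: "sQ * (norm x)^2 \<le> x \<bullet> (Q *v x)" for x
    unfolding sQ_def by (rule smin_lower[OF Qsym]) (use QIv in \<open>meson order_trans zero_le_power2\<close>)
  have Vle: "L.V x \<le> Pn * (norm x)^2" for x using L.V_le by (simp add: Pn_def)
  have sQP: "sQ \<le> Pn"
    using Qlow[of "axis undefined 1"] L.Q_le_V[of "axis undefined 1"] Vle[of "axis undefined 1"] by simp
  have beta_eq: "beta = Pn / sQ" by (simp add: beta_def Pn_def sQ_def)
  have beta1: "beta \<ge> 1" using sQP sQ1 by (simp add: beta_eq)
  have th0: "0 \<le> \<theta>" "\<theta> \<le> 1" using beta1 by (auto simp: \<theta>_def)
  have hQ: "(1 - \<theta>) * L.V x \<le> x \<bullet> (Q *v x)" for x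
  proof -
    have "(1 - \<theta>) * L.V x = (sQ / Pn) * L.V x" using sQ1 P1 by (simp add: \<theta>_def beta_eq)
    also have "\<dots> \<le> (sQ / Pn) * (Pn * (norm x)^2)" using sQ1 P1 Vle[of x] by (intro mult_left_mono) auto
    also have "\<dots> = sQ * (norm x)^2" using P1 by simp
    also have "\<dots> \<le> x \<bullet> (Q *v x)" by (rule Qlow)
    finally show ?thesis .
  qed
  have ep0: "ep \<ge> 0" using Perr specnorm_nonneg[of "P - Ps"] by linarith
  define \<delta> where "\<delta> = ep / sQ"
  have d0: "\<delta> \<ge> 0" using ep0 sQ1 by (simp add: \<delta>_def)
  have P_psdf: "psdf P" using P by (simp add: psd_def psdf_def symf_T)
  have hF: "(1 - \<delta>) * L.V x \<le> x \<bullet> (P *v x) \<and> x \<bullet> (P *v x) \<le> (1 + \<delta>) * L.V x" for x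
  proof -
    have e: "x \<bullet> (P *v x) - L.V x = x \<bullet> ((P - Ps) *v x)"
      by (simp add: L.V_def matrix_vector_mult_diff_rdistrib inner_diff_right)
    have "\<bar>x \<bullet> ((P - Ps) *v x)\<bar> \<le> specnorm (P - Ps) * (norm x)^2" by (rule quad_abs_le)
    also have "\<dots> \<le> ep * (norm x)^2" using Perr by (intro mult_right_mono) auto
    also have "\<dots> = \<delta> * (sQ * (norm x)^2)" using sQ1 by (simp add: \<delta>_def)
    also have "\<dots> \<le> \<delta> * L.V x" using Qlow[of x] L.Q_le_V[of x] d0 by (intro mult_left_mono) auto
    finally have "\<bar>x \<bullet> (P *v x) - L.V x\<bar> \<le> \<delta> * L.V x" using e by simp
    then show ?thesis by (simp add: algebra_simps abs_le_iff)
  qed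
  define F where "F = (L0.ric ^^ (N - 1)) P"
  have it: "psdf F \<and> (\<forall>x. (1 - \<delta> * \<theta>^(N-1)) * L.V x \<le> x \<bullet> (F *v x) \<and> x \<bullet> (F *v x) \<le> (1 + \<delta> * \<theta>^(N-1)) * L.V x)"
    unfolding F_def by (rule L.ric_iter[OF P_psdf d0 th0 hQ hF])
  have F_psdf: "psdf F" using it by blast
  have ricq: "L0.ric = riccati As Bs Q R" by (rule ext) (simp add: L0.ric_def)
  have Kmpc_eq: "Kmpc = L0.gain F" by (simp add: Kmpc_def F_def ricq L0.gain_def)
  have Ks_eq: "Ks = L.Ks" by (simp add: Ks_def L.Ks_def L0.gain_def)
  define eta where "eta = beta * (1 - 1 / beta) ^ (N - 1) * ep"
  have eta0: "eta \<ge> 0" using beta1 ep0 th0 by (simp add: eta_def \<theta>_def[symmetric])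
  have eta_eq: "eta = \<delta> * \<theta>^(N-1) * Pn"
  proof -
    have a: "eta = \<theta>^(N-1) * (beta * ep)" by (simp add: eta_def \<theta>_def mult_ac)
    have b: "beta * ep = \<delta> * Pn" using sQ1 by (simp add: beta_eq \<delta>_def)
    show ?thesis unfolding a b by (simp add: mult_ac)
  qed
  have symD: "symf (F - Ps)"
    using F_psdf L.Ps_sym by (simp add: psdf_def symf_def matrix_vector_mult_diff_rdistrib inner_diff_right)
  have D: "norm ((F - Ps) *v x) \<le> eta * norm x" for x
  proof (rule polar[OF symD])
    fix y
    have e: "y \<bullet> ((F - Ps) *v y) = y \<bullet> (F *v y) - L.V y"
      by (simp add: L.V_def matrix_vector_mult_diff_rdistrib inner_diff_right)
    have "\<bar>y \<bullet> (F *v y) - L.V y\<bar> \<le> \<delta> * \<theta>^(N-1) * L.V y" using it by (simp add: algebra_simps abs_le_iff)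
    also have "\<dots> \<le> \<delta> * \<theta>^(N-1) * (Pn * (norm y)^2)" using Vle[of y] d0 th0 by (intro mult_left_mono) auto
    finally show "\<bar>y \<bullet> ((F - Ps) *v y)\<bar> \<le> eta * (norm y)^2" using e by (simp add: eta_eq mult_ac)
  qed
  have nPU: "specnorm Ps \<le> Ups" using nP .
  have pw: "specnorm Ps powr (3 / 2) = specnorm Ps * sqrt (specnorm Ps)"
  proof -
    have "specnorm Ps powr (3/2) = specnorm Ps powr 1 * specnorm Ps powr (1/2)"
      by (subst powr_add[symmetric]) simp
    also have "\<dots> = specnorm Ps * sqrt (specnorm Ps)" using P1 by (simp add: powr_half_sqrt Pn_def)
    finally show ?thesis .
  qed
  have small: "eta \<le> smin R / (40 * Ups^4 * (specnorm Ps * sqrt (specnorm Ps)))"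
    using c2 em unfolding pw eta_def by linarith
  note pt = L.perturb[OF F_psdf eta0 D nB nPU small]
  define \<rho> where "\<rho> = 1 - 1 / (2 * Pn)"
  have r0: "0 \<le> \<rho>" "\<rho> < 1" using P1 by (auto simp: \<rho>_def field_simps)
  have decm: "L.V ((As - Bs ** Kmpc) *v x) \<le> \<rho> * L.V x" for x
    using pt(2)[of x] by (simp add: Kmpc_eq \<rho>_def Pn_def)
  have decs: "L.V ((As - Bs ** Ks) *v x) \<le> \<rho> * L.V x" for x
  proof -
    have "L.V x \<le> Pn * (norm x)^2" by (rule Vle)
    then have "L.V x / (2 * Pn) \<le> (norm x)^2" using P1 L.V_nonneg[of x] by (simp add: field_simps)
    then show ?thesis using L.VLs[of x] by (simp add: Ks_eq L.Ls_def \<rho>_def algebra_simps)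
  qed
  have schur: "schur_stable (As - Bs ** Kmpc)"
    by (rule schur_from_lyap[OF L.Ps_sym _ _ r0(2)]) (use L.norm_le_V decm in \<open>auto simp: L.V_def\<close>)
  have mdm: "(norm (mpow (As - Bs ** Kmpc) s *v x))^2 \<le> specnorm Ps * \<rho>^s * (norm x)^2" for s x
    by (rule mpow_decay) (use L.norm_le_V L.V_le decm r0 in \<open>auto simp: L.V_def\<close>)
  have mds: "(norm (mpow (As - Bs ** Ks) s *v x))^2 \<le> specnorm Ps * \<rho>^s * (norm x)^2" for s x
    by (rule mpow_decay) (use L.norm_le_V L.V_le decs r0 in \<open>auto simp: L.V_def\<close>)
  note cfm = cost_formula[OF noise r0 mdm]
  note cfs = cost_formula[OF noise r0 mds]
  have wm: "L.wt Kmpc sums ((\<Sum>s. trq (Q + transpose Kmpc ** R ** Kmpc) (mpow (As - Bs ** Kmpc) s)) - trq Ps (mat 1))"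
    by (rule L.cost_split[OF r0 mdm cfm(1)])
  have ws: "L.wt Ks sums ((\<Sum>s. trq (Q + transpose Ks ** R ** Ks) (mpow (As - Bs ** Ks) s)) - trq Ps (mat 1))"
    by (rule L.cost_split[OF r0 mds cfs(1)])
  have wt0: "L.wt Ks = (\<lambda>s. 0)" by (rule ext) (simp add: L.wt_def L.W_def Ks_eq)
  have sums_s: "(\<Sum>s. trq (Q + transpose Ks ** R ** Ks) (mpow (As - Bs ** Ks) s)) = trq Ps (mat 1)"
    using ws unfolding wt0 using sums_zero sums_unique2 by fastforce
  have diff: "lqr_cost M As Bs Q R x0 w Kmpc - lqr_cost M As Bs Q R x0 w Ks = sw^2 * suminf (L.wt Kmpc)"
    unfolding cfm(2) cfs(2) sums_s using sums_unique[OF wm] by (simp add: algebra_simps)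
  define c1 where "c1 = Ups^2 * eta^2 * specnorm Ps"
  have c10: "c1 \<ge> 0" using P1 by (simp add: c1_def Pn_def)
  have dK: "(norm ((Kmpc - L.Ks) *v x))^2 \<le> c1 * (norm x)^2" for x
    using pt(1)[of x] by (simp add: Kmpc_eq c1_def)
  define cG where "cG = specnorm R + Ups^3"
  have cG0: "cG \<ge> 0" using specnorm_nonneg[of R] nPU P1 unfolding cG_def Pn_def
    by (metis add_nonneg_nonneg le_numeral_extra(1) order_trans zero_le_power)
  have wb: "L.wt Kmpc s \<le> (cG * (real CARD('m) * (c1 * specnorm Ps))) * \<rho>^s" for s
  proof -
    have "L.wt Kmpc s \<le> (specnorm R + Ups^3) * (real CARD('m) * (c1 * (specnorm Ps * \<rho>^s)))"
      by (rule L.wt_bound[OF nB nPU dK _ c10]) (use mdm in \<open>simp add: mult_ac\<close>)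
    then show ?thesis by (simp add: cG_def mult_ac)
  qed
  have sg: "(\<lambda>s. (cG * (real CARD('m) * (c1 * specnorm Ps))) * \<rho>^s) sums ((cG * (real CARD('m) * (c1 * specnorm Ps))) * (1 / (1 - \<rho>)))"
    using r0 by (intro sums_mult geometric_sums) simp
  have "suminf (L.wt Kmpc) \<le> (cG * (real CARD('m) * (c1 * specnorm Ps))) * (1 / (1 - \<rho>))"
    using sums_le[OF wb wm sg] sums_unique[OF wm] by simp
  also have "1 / (1 - \<rho>) = 2 * Pn" using P1 by (simp add: \<rho>_def)
  finally have sb: "suminf (L.wt Kmpc) \<le> cG * (real CARD('m) * (Ups^2 * eta^2 * Pn * Pn)) * (2 * Pn)"
    by (simp add: c1_def Pn_def mult_ac)
  have "lqr_cost M As Bs Q R x0 w Kmpc - lqr_cost M As Bs Q R x0 w Ks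
      \<le> sw^2 * (cG * (real CARD('m) * (Ups^2 * eta^2 * Pn * Pn)) * (2 * Pn))"
    unfolding diff by (rule mult_left_mono[OF sb]) simp
  also have "\<dots> \<le> 32 * real CARD('m) * sw^2 * Ups^4 * (sqrt Pn + 1)^2 * Pn * cG * eta^2"
    by (rule final_arith) (use P1 nPU cG0 in \<open>auto simp: Pn_def\<close>)
  also have "\<dots> = 32 * real CARD('m) * sw ^ 2 * Ups ^ 4 * (sqrt (specnorm Ps) + 1) ^ 2 * specnorm Ps
         * (specnorm R + Ups ^ 3) * beta ^ 2 * (1 - 1 / beta) ^ (2 * (N - 1)) * ep ^ 2"
  proof -
    have p: "(1 - 1 / beta) ^ (2 * (N - 1)) = ((1 - 1 / beta) ^ (N - 1))^2" by (metis power_mult mult.commute)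
    have e: "eta^2 = beta^2 * ((1 - 1 / beta) ^ (N - 1))^2 * ep^2" by (simp add: eta_def power_mult_distrib)
    show ?thesis unfolding p e Pn_def cG_def by (simp only: mult_ac)
  qed
  finally show ?thesis using schur by blast
qed


end
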